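(* Let $a,b\in\mathbb{R}\setminus\{0\}$, let $\nu_1,\nu_2:\mathbb{R}^2\to\mathbb{R}$ be smooth, and consider the two-parameter family of Hamiltonians on $(\mathbb{R}^2, dq\wedge dp)$ $$H_{j,t}(q,p)=\frac{a}{2}p^2+\frac{b}{6}q^6+\frac{\nu_1(j,t)}{2}q^2+\frac{\nu_2(j,t)}{4}q^4,$$ where $\nu_1$ satisfies $$\nu_1(0,0)=0,\qquad \frac{\partial \nu_1}{\partial j}(0,0)=0,\qquad \frac{\partial^2 \nu_1}{\partial j^2}(0,0)\neq 0,\qquad \frac{\partial \nu_1}{\partial t}(0,0)\neq 0.$$ Fix $\tau\in\mathbb{R}$ sufficiently close to $0$, and let $j_0^{\pm}=j_0^{\pm}(\tau)$ be real numbers with $\nu_1(j_0^{\pm},\tau)=0$, and assume $\nu_2(j_0^{\pm},\tau)\neq 0$. Then Hamiltonian flip bifurcations (with respect to $j$, at fixed $t=\tau$) of the singularity at the origin occur at $(j,t)=(j_0^{\pm},\tau)$. If $a\,\nu_2(j_0^{\pm},\tau)<0$ the bifurcation is dual, and if $a\,\nu_2(j_0^{\pm},\tau)>0$ it is not dual.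
   Context: A singular point $x$ is stable (in the sense of Lyapunov) if all points in a sufficiently small neighbourhood of $x$ remain close to $x$ under the flow for all time; otherwise it is unstable. It is a centre if all eigenvalues of the linearised system are non-zero and purely imaginary, and a saddle if the linearisation has no purely imaginary eigenvalues ($0$ counted as purely imaginary). The systems are considered modulo the $\mathbb{Z}_2$-action $(q,p)\mapsto(-q,-p)$ (equivalently on the reduced phase space, the cone $\{(u,v,w): 4uv=w^2,\ u,v\ge0\}$ with $u=q^2/2$, $v=p^2/2$, $w=qp$, whose apex corresponds to the origin). Hamiltonian flip bifurcation (for a family depending on a parameter $j$, with the origin a singular point): if the origin is stable and becomes unstable as $j$ passes through $j_0$, while at the same time an additional singularity which is a centre is produced, the origin undergoes a Hamiltonian flip bifurcation at $j=j_0$. If the origin is unstable and becomes stable as $j$ passes through $j_0$, while at the same time an additional singularity which is a saddle is produced, it undergoes a dual Hamiltonian flip bifurcation at $j=j_0$. *)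

theory Defs
  imports "HOL-Analysis.Analysis"
begin

fun Ck2 :: "nat \<Rightarrow> (real \<Rightarrow> real \<Rightarrow> real) \<Rightarrow> bool" where
  "Ck2 0 f = continuous_on UNIV (\<lambda>z. f (fst z) (snd z))"
| "Ck2 (Suc k) f = (continuous_on UNIV (\<lambda>z. f (fst z) (snd z)) \<and>
     (\<exists>f1 f2. (\<forall>x y. ((\<lambda>s. f s y) has_real_derivative f1 x y) (at x) \<and>
                      ((\<lambda>s. f x s) has_real_derivative f2 x y) (at y))
             \<and> Ck2 k f1 \<and> Ck2 k f2))"

definition smooth2 :: "(real \<Rightarrow> real \<Rightarrow> real) \<Rightarrow> bool" where
  "smooth2 f \<longleftrightarrow> (\<forall>k. Ck2 k f)"

definition H_fam :: "real \<Rightarrow> real \<Rightarrow> (real \<Rightarrow> real \<Rightarrow> real) \<Rightarrow> (real \<Rightarrow> real \<Rightarrow> real)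
    \<Rightarrow> real \<Rightarrow> real \<Rightarrow> real \<times> real \<Rightarrow> real" where
  "H_fam a b \<nu>1 \<nu>2 j t = (\<lambda>(q, p). a / 2 * p ^ 2 + b / 6 * q ^ 6
        + \<nu>1 j t / 2 * q ^ 2 + \<nu>2 j t / 4 * q ^ 4)"

definition ham_vf :: "(real \<times> real \<Rightarrow> real) \<Rightarrow> real \<times> real \<Rightarrow> real \<times> real" where
  "ham_vf H = (\<lambda>z. (deriv (\<lambda>p. H (fst z, p)) (snd z), - deriv (\<lambda>q. H (q, snd z)) (fst z)))"

definition lyap_stable :: "(real \<times> real \<Rightarrow> real \<times> real) \<Rightarrow> real \<times> real \<Rightarrow> bool" where
  "lyap_stable F x0 \<longleftrightarrow> (\<forall>\<epsilon>>0. \<exists>\<delta>>0. \<forall>s T y. s \<le> 0 \<and> 0 \<le> T \<and>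
      (\<forall>t\<in>{s..T}. (y has_vector_derivative F (y t)) (at t within {s..T})) \<and>
      dist (y 0) x0 < \<delta> \<longrightarrow> (\<forall>t\<in>{s..T}. dist (y t) x0 < \<epsilon>))"

text \<open>Eigenvalues of the linearisation (complexified Jacobian) of F at x.\<close>
definition lin_eigenvalues :: "(real \<times> real \<Rightarrow> real \<times> real) \<Rightarrow> real \<times> real \<Rightarrow> complex set" where
  "lin_eigenvalues F x = {e. \<exists>L v1 v2. (F has_derivative L) (at x) \<and> (v1, v2) \<noteq> (0, 0) \<and>
      of_real (fst (L (1, 0))) * v1 + of_real (fst (L (0, 1))) * v2 = e * v1 \<and>
      of_real (snd (L (1, 0))) * v1 + of_real (snd (L (0, 1))) * v2 = e * v2}"

definition is_centre :: "(real \<times> real \<Rightarrow> real \<times> real) \<Rightarrow> real \<times> real \<Rightarrow> bool" where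
  "is_centre F x \<longleftrightarrow> F differentiable (at x) \<and>
      (\<forall>e\<in>lin_eigenvalues F x. e \<noteq> 0 \<and> Re e = 0)"

definition is_saddle :: "(real \<times> real \<Rightarrow> real \<times> real) \<Rightarrow> real \<times> real \<Rightarrow> bool" where
  "is_saddle F x \<longleftrightarrow> F differentiable (at x) \<and>
      (\<forall>e\<in>lin_eigenvalues F x. Re e \<noteq> 0)"

text \<open>(Dual) Hamiltonian flip bifurcation of the origin at j = j0 for the family F j.
  sigma = 1 or -1 encodes the direction in which j passes through j0.
  Nonzero singular points of the Z2-equivariant field on R^2 represent the singular points of the
  reduced system on the cone other than the apex.\<close>
definition flip_bif :: "bool \<Rightarrow> (real \<Rightarrow> real \<times> real \<Rightarrow> real \<times> real) \<Rightarrow> real \<Rightarrow> bool" where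
  "flip_bif dual F j0 \<longleftrightarrow> (\<forall>j. F j 0 = 0) \<and>
     (\<exists>\<epsilon>>0. \<exists>r>0. \<exists>\<sigma>\<in>{-1, 1::real}.
        (\<forall>j. 0 < \<sigma> * (j0 - j) \<and> \<sigma> * (j0 - j) < \<epsilon> \<longrightarrow>
             (lyap_stable (F j) 0 \<longleftrightarrow> \<not> dual) \<and> (\<forall>x. x \<noteq> 0 \<and> norm x < r \<longrightarrow> F j x \<noteq> 0)) \<and>
        (\<forall>j. 0 < \<sigma> * (j - j0) \<and> \<sigma> * (j - j0) < \<epsilon> \<longrightarrow> (lyap_stable (F j) 0 \<longleftrightarrow> dual)) \<and>
        (\<exists>c. (\<forall>j. 0 < \<sigma> * (j - j0) \<and> \<sigma> * (j - j0) < \<epsilon> \<longrightarrow>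
                 c j \<noteq> 0 \<and> F j (c j) = 0 \<and>
                 (if dual then is_saddle (F j) (c j) else is_centre (F j) (c j))) \<and>
             (c \<longlongrightarrow> 0) (at j0 within {j. 0 < \<sigma> * (j - j0)})))"

abbreviation "hamiltonian_flip \<equiv> flip_bif False"
abbreviation "dual_hamiltonian_flip \<equiv> flip_bif True"

end

theory Submission
  imports Defs
begin

definition FF :: "real \<Rightarrow> real \<Rightarrow> real \<Rightarrow> real \<Rightarrow> real \<times> real \<Rightarrow> real \<times> real" where
  "FF a b m1 m2 = (\<lambda>z. (a * snd z, - (b * fst z ^ 5 + m1 * fst z + m2 * fst z ^ 3)))"

lemma ham_FF: "ham_vf (H_fam a b n1 n2 j t) = FF a b (n1 j t) (n2 j t)"
proof (rule ext)
  fix z :: "real \<times> real"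
  obtain q p where z: "z = (q, p)" by (cases z)
  have d1: "deriv (\<lambda>p. H_fam a b n1 n2 j t (q, p)) p = a * p"
    unfolding H_fam_def
    by (rule DERIV_imp_deriv) (auto intro!: derivative_eq_intros simp: algebra_simps)
  have d2: "deriv (\<lambda>q. H_fam a b n1 n2 j t (q, p)) q = b * q ^ 5 + n1 j t * q + n2 j t * q ^ 3"
    unfolding H_fam_def
    by (rule DERIV_imp_deriv) (auto intro!: derivative_eq_intros simp: algebra_simps)
  show "ham_vf (H_fam a b n1 n2 j t) z = FF a b (n1 j t) (n2 j t) z"
    unfolding ham_vf_def FF_def z using d1 d2 by simp
qed

lemma vd_fst: assumes "(y has_vector_derivative v) F"
  shows "((\<lambda>t. fst (y t)) has_real_derivative fst v) F"
proof -
  have "(y has_derivative (\<lambda>x. x *\<^sub>R v)) F" using assms by (simp add: has_vector_derivative_def)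
  from has_derivative_fst[OF this] show ?thesis
    by (simp add: has_field_derivative_def mult.commute[of _ "fst v"])
qed

lemma vd_snd: assumes "(y has_vector_derivative v) F"
  shows "((\<lambda>t. snd (y t)) has_real_derivative snd v) F"
proof -
  have "(y has_derivative (\<lambda>x. x *\<^sub>R v)) F" using assms by (simp add: has_vector_derivative_def)
  from has_derivative_snd[OF this] show ?thesis
    by (simp add: has_field_derivative_def mult.commute[of _ "snd v"])
qed

definition WW :: "real \<Rightarrow> real \<Rightarrow> real \<Rightarrow> real \<Rightarrow> real \<times> real \<Rightarrow> real" where
  "WW a b m1 m2 = (\<lambda>z. snd z ^ 2 / 2 + (b / 6 * fst z ^ 6 + m1 / 2 * fst z ^ 2 + m2 / 4 * fst z ^ 4) / a)"

lemma WW_deriv: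
  assumes "a \<noteq> 0" and "(y has_vector_derivative FF a b m1 m2 (y t)) (at t within S)"
  shows "((\<lambda>t. WW a b m1 m2 (y t)) has_real_derivative 0) (at t within S)"
proof -
  have q: "((\<lambda>t. fst (y t)) has_real_derivative a * snd (y t)) (at t within S)"
    using vd_fst[OF assms(2)] by (simp add: FF_def)
  have p: "((\<lambda>t. snd (y t)) has_real_derivative - (b * fst (y t) ^ 5 + m1 * fst (y t) + m2 * fst (y t) ^ 3)) (at t within S)"
    using vd_snd[OF assms(2)] by (simp add: FF_def)
  define Q where "Q = fst (y t)"
  define P where "P = snd (y t)"
  have "((\<lambda>t. WW a b m1 m2 (y t)) has_real_derivative
     (P * (- (b * Q ^ 5 + m1 * Q + m2 * Q ^ 3)) + (b * Q ^ 5 + m1 * Q + m2 * Q ^ 3) * (a * P) / a)) (at t within S)"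
    unfolding WW_def Q_def P_def using assms(1)
    by (auto intro!: derivative_eq_intros q p simp: field_simps eval_nat_numeral)
  moreover have "P * (- (b * Q ^ 5 + m1 * Q + m2 * Q ^ 3)) + (b * Q ^ 5 + m1 * Q + m2 * Q ^ 3) * (a * P) / a = 0"
    using assms(1) by (simp add: field_simps)
  ultimately show ?thesis by simp
qed

lemma WW_const:
  assumes "a \<noteq> 0" and "\<forall>t\<in>{s..T}. (y has_vector_derivative FF a b m1 m2 (y t)) (at t within {s..T})"
    and "t \<in> {s..T}" and "t' \<in> {s..T}"
  shows "WW a b m1 m2 (y t) = WW a b m1 m2 (y t')"
proof -
  have "\<exists>c. \<forall>x\<in>{s..T}. WW a b m1 m2 (y x) = c"
    by (rule has_field_derivative_zero_constant) (use WW_deriv[OF assms(1)] assms(2) in auto)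
  then show ?thesis using assms(3,4) by auto
qed

lemma vd_cont_on:
  assumes "\<forall>t\<in>{s..T}. (y has_vector_derivative F (y t)) (at t within {s..T})"
  shows "continuous_on {s..T} y"
  unfolding continuous_on_eq_continuous_within
proof
  fix x assume "x \<in> {s..T}"
  then show "continuous (at x within {s..T}) y"
  proof -
    have "(y has_vector_derivative F (y x)) (at x within {s..T})" using assms \<open>x \<in> {s..T}\<close> by blast
    then show ?thesis by (rule has_vector_derivative_continuous)
  qed
qed

lemma IVT_between:
  fixes g :: "real \<Rightarrow> real"
  assumes "continuous_on {s..T} g" "s \<le> 0" "0 \<le> T" "t1 \<in> {s..T}" "g 0 \<le> e" "e \<le> g t1"
  shows "\<exists>t2\<in>{s..T}. g t2 = e"
proof (cases "0 \<le> t1")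
  case True
  have "{0..t1} \<subseteq> {s..T}" using assms(2,4) by auto
  then have "continuous_on {0..t1} g" using continuous_on_subset[OF assms(1)] by blast
  from IVT'[of g 0 e t1, OF assms(5,6) True this] obtain x where "0 \<le> x" "x \<le> t1" "g x = e" by blast
  then show ?thesis using assms(2,4) by (intro bexI[of _ x]) auto
next
  case False
  have "{t1..0} \<subseteq> {s..T}" using assms(3,4) by auto
  then have "continuous_on {t1..0} g" using continuous_on_subset[OF assms(1)] by blast
  from IVT2'[of g 0 e t1, OF assms(5,6) _ this] False obtain x where "t1 \<le> x" "x \<le> 0" "g x = e" by auto
  then show ?thesis using assms(3,4) by (intro bexI[of _ x]) auto
qed

lemma stable_from_energy:
  fixes F :: "real \<times> real \<Rightarrow> real \<times> real" and W :: "real \<times> real \<Rightarrow> real"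
  assumes cons: "\<And>s T y t. s \<le> 0 \<Longrightarrow> 0 \<le> T \<Longrightarrow>
      (\<forall>t\<in>{s..T}. (y has_vector_derivative F (y t)) (at t within {s..T})) \<Longrightarrow> t \<in> {s..T} \<Longrightarrow> W (y t) = W (y 0)"
    and rho: "\<rho> > 0" and kap: "\<kappa> > 0" and K: "K > 0"
    and bnd: "\<And>x. norm x \<le> \<rho> \<Longrightarrow> \<kappa> * (norm x)^2 \<le> W x \<and> W x \<le> K * (norm x)^2"
  shows "lyap_stable F 0"
  unfolding lyap_stable_def
proof (intro allI impI)
  fix \<epsilon> :: real assume "\<epsilon> > 0"
  define e where "e = min \<epsilon> \<rho> / 2"
  have e: "e > 0" "e < \<epsilon>" "e \<le> \<rho>" using \<open>\<epsilon> > 0\<close> rho by (auto simp: e_def)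
  define c where "c = sqrt (\<kappa> / (2 * K))"
  have c: "c > 0" "c^2 = \<kappa> / (2 * K)" using kap K by (auto simp: c_def)
  define \<delta> where "\<delta> = min e (e * c)"
  have d: "\<delta> > 0" "\<delta> \<le> e" using e c by (auto simp: \<delta>_def)
  have "\<delta>^2 \<le> (e * c)^2" using d by (intro power_mono) (auto simp: \<delta>_def)
  also have "\<dots> = e^2 * \<kappa> / (2 * K)" using c by (simp add: power_mult_distrib)
  finally have dd: "\<delta>^2 \<le> e^2 * \<kappa> / (2 * K)" .
  have "K * \<delta>^2 \<le> K * (e^2 * \<kappa> / (2 * K))" using dd K by (intro mult_left_mono) auto
  also have "\<dots> = \<kappa> * e^2 / 2" using K by simp
  also have "\<dots> < \<kappa> * e^2" using kap e by simp
  finally have d2: "K * \<delta>^2 < \<kappa> * e^2" .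
  show "\<exists>\<delta>>0. \<forall>s T y. s \<le> 0 \<and> 0 \<le> T \<and>
      (\<forall>t\<in>{s..T}. (y has_vector_derivative F (y t)) (at t within {s..T})) \<and>
      dist (y 0) 0 < \<delta> \<longrightarrow> (\<forall>t\<in>{s..T}. dist (y t) 0 < \<epsilon>)"
  proof (intro exI[of _ \<delta>] conjI allI impI)
    show "\<delta> > 0" by fact
    fix s T :: real and y :: "real \<Rightarrow> real \<times> real"
    assume H: "s \<le> 0 \<and> 0 \<le> T \<and> (\<forall>t\<in>{s..T}. (y has_vector_derivative F (y t)) (at t within {s..T})) \<and>
      dist (y 0) 0 < \<delta>"
    have cy: "continuous_on {s..T} y" using H vd_cont_on[of s T y F] by simp
    have cg: "continuous_on {s..T} (\<lambda>t. norm (y t))" by (intro continuous_intros cy)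
    have y0: "norm (y 0) < \<delta>" using H by simp
    show "\<forall>t\<in>{s..T}. dist (y t) 0 < \<epsilon>"
    proof (rule ballI, rule ccontr)
      fix t1 assume t1: "t1 \<in> {s..T}" "\<not> dist (y t1) 0 < \<epsilon>"
      then have "e \<le> norm (y t1)" using e by simp
      moreover have "norm (y 0) \<le> e" using y0 d by simp
      ultimately obtain t2 where t2: "t2 \<in> {s..T}" "norm (y t2) = e"
        using IVT_between[OF cg _ _ t1(1), of e] H by auto
      have "\<kappa> * e^2 \<le> W (y t2)" using bnd[of "y t2"] t2 e by simp
      also have "W (y t2) = W (y 0)" using cons[of s T y t2] H t2 by simp
      also have "W (y 0) \<le> K * (norm (y 0))^2" using bnd[of "y 0"] y0 d e by simp
      also have "\<dots> \<le> K * \<delta>^2" using K y0 by (intro mult_left_mono power_mono) auto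
      finally show False using d2 by simp
    qed
  qed
qed

lemma poly_bound:
  fixes u r A B :: real
  assumes "0 \<le> u" "u \<le> r" "r \<le> 1"
  shows "\<bar>A * u^2 + B * u^3\<bar> \<le> (\<bar>A\<bar> + \<bar>B\<bar>) * u * r"
proof -
  have "\<bar>A * u^2 + B * u^3\<bar> \<le> \<bar>A\<bar> * u^2 + \<bar>B\<bar> * u^3"
    using assms(1) by (simp add: abs_mult abs_triangle_ineq [THEN order_trans])
  moreover have "u^2 \<le> u * r" using assms by (simp add: power2_eq_square mult_left_mono)
  moreover have "u^3 \<le> u * r"
  proof -
    have "u^3 = u * (u * u)" by (simp add: power3_eq_cube)
    also have "\<dots> \<le> u * (r * 1)" using assms by (intro mult_left_mono mult_mono) auto
    finally show ?thesis by simp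
  qed
  ultimately have "\<bar>A * u^2 + B * u^3\<bar> \<le> \<bar>A\<bar> * (u * r) + \<bar>B\<bar> * (u * r)"
    by (smt (verit) abs_ge_zero mult_left_mono)
  then show ?thesis by (simp add: algebra_simps)
qed

lemma norm_sq_pair: "(norm (x :: real \<times> real))^2 = (fst x)^2 + (snd x)^2"
  by (cases x) (simp add: norm_Pair)

lemma WW_expand: "a \<noteq> 0 \<Longrightarrow> WW a b m1 m2 x = (snd x)^2 / 2 + (m1 / a) / 2 * (fst x)^2
    + (m2 / (4 * a)) * ((fst x)^2)^2 + (b / (6 * a)) * ((fst x)^2)^3"
proof -
  have e4: "((fst x)^2)^2 = (fst x)^4" by (simp flip: power_mult)
  have e6: "((fst x)^2)^3 = (fst x)^6" by (simp flip: power_mult)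
  show ?thesis unfolding WW_def e4 e6 by (simp add: add_divide_distrib)
qed

lemma FF_stable:
  assumes "a * m1 > 0"
  shows "lyap_stable (FF a b m1 m2) 0"
proof -
  have a: "a \<noteq> 0" using assms by auto
  define k where "k = m1 / a"
  have "k = (a * m1) / (a * a)" using a by (simp add: k_def)
  moreover have "0 < (a * m1) / (a * a)" proof (rule divide_pos_pos)
    show "0 < a * m1" by (rule assms)
    show "0 < a * a" using a by (simp add: zero_less_mult_iff linorder_neq_iff, blast)
  qed
  ultimately have k: "k > 0" by (simp only:)
  define A where "A = m2 / (4 * a)"
  define B where "B = b / (6 * a)"
  define r where "r = min 1 (k / (4 * (\<bar>A\<bar> + \<bar>B\<bar> + 1)))"
  have r: "r > 0" "r \<le> 1" "(\<bar>A\<bar> + \<bar>B\<bar>) * r \<le> k / 4"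
  proof -
    show "r > 0" "r \<le> 1" using k by (auto simp: r_def)
    have "(\<bar>A\<bar> + \<bar>B\<bar>) * r \<le> (\<bar>A\<bar> + \<bar>B\<bar> + 1) * (k / (4 * (\<bar>A\<bar> + \<bar>B\<bar> + 1)))"
      using \<open>r > 0\<close> by (intro mult_mono) (auto simp: r_def)
    also have "\<dots> = k / 4"
    proof -
      have "\<bar>A\<bar> + \<bar>B\<bar> + 1 \<noteq> 0" by (smt (verit) abs_ge_zero)
      then show ?thesis by (simp add: field_simps)
    qed
    finally show "(\<bar>A\<bar> + \<bar>B\<bar>) * r \<le> k / 4" .
  qed
  define \<rho> where "\<rho> = sqrt r"
  show ?thesis
  proof (rule stable_from_energy[where W = "WW a b m1 m2" and \<rho> = \<rho> and \<kappa> = "min (1/2) (k/4)" and K = "max (1/2) k"])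
    fix s T :: real and y :: "real \<Rightarrow> real \<times> real" and t
    assume "s \<le> 0" "0 \<le> T" "\<forall>t\<in>{s..T}. (y has_vector_derivative FF a b m1 m2 (y t)) (at t within {s..T})"
      "t \<in> {s..T}"
    then show "WW a b m1 m2 (y t) = WW a b m1 m2 (y 0)" using WW_const[OF a, where s=s and T=T and y=y and t=t and t'=0] by simp
  next
    show "\<rho> > 0" using r by (simp add: \<rho>_def)
    show "min (1/2) (k/4) > 0" "max (1/2) k > 0" using k by auto
  next
    fix x :: "real \<times> real" assume x: "norm x \<le> \<rho>"
    define u where "u = (fst x)^2"
    define v where "v = (snd x)^2"
    have nx: "(norm x)^2 = u + v" by (simp add: norm_sq_pair u_def v_def)
    have uv: "u \<ge> 0" "v \<ge> 0" by (auto simp: u_def v_def)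
    have "(norm x)^2 \<le> \<rho>^2" using x by (intro power_mono) auto
    then have ur: "u \<le> r" using r uv nx by (simp add: \<rho>_def)
    have W: "WW a b m1 m2 x = v / 2 + k / 2 * u + (A * u^2 + B * u^3)"
      using WW_expand[OF a, of b m1 m2 x] unfolding u_def[symmetric] v_def[symmetric] k_def[symmetric]
        A_def[symmetric] B_def[symmetric] by linarith
    have err: "\<bar>A * u^2 + B * u^3\<bar> \<le> k / 4 * u"
    proof -
      have "\<bar>A * u^2 + B * u^3\<bar> \<le> (\<bar>A\<bar> + \<bar>B\<bar>) * u * r" by (rule poly_bound) (use uv ur r in auto)
      also have "\<dots> = ((\<bar>A\<bar> + \<bar>B\<bar>) * r) * u" by simp
      also have "\<dots> \<le> k / 4 * u" using r uv by (intro mult_right_mono) auto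
      finally show ?thesis .
    qed
    have lo: "min (1/2) (k/4) * (u + v) \<le> v / 2 + k / 4 * u"
    proof -
      have "min (1/2) (k/4) * u \<le> k / 4 * u" using uv by (intro mult_right_mono) auto
      moreover have "min (1/2) (k/4) * v \<le> 1/2 * v" using uv by (intro mult_right_mono) auto
      ultimately show ?thesis by (simp add: algebra_simps)
    qed
    have hi: "v / 2 + 3 * k / 4 * u \<le> max (1/2) k * (u + v)"
    proof -
      have "3 * k / 4 * u \<le> max (1/2) k * u" using uv k by (intro mult_right_mono) auto
      moreover have "1/2 * v \<le> max (1/2) k * v" using uv by (intro mult_right_mono) auto
      ultimately show ?thesis by (simp add: algebra_simps)
    qed
    show "min (1/2) (k/4) * (norm x)^2 \<le> WW a b m1 m2 x \<and> WW a b m1 m2 x \<le> max (1/2) k * (norm x)^2"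
    proof
      have e1: "A * u^2 + B * u^3 \<le> k / 4 * u" "- (A * u^2 + B * u^3) \<le> k / 4 * u"
        using abs_le_D1[OF err] abs_le_D2[OF err] by auto
      show "min (1/2) (k/4) * (norm x)^2 \<le> WW a b m1 m2 x" unfolding nx W using lo e1 by linarith
      show "WW a b m1 m2 x \<le> max (1/2) k * (norm x)^2" unfolding nx W using hi e1 by linarith
    qed
  qed
qed

lemma scalar_ode_solution:
  fixes f :: "real \<Rightarrow> real"
  assumes ab: "\<alpha> < q0" "q0 < q1" "q1 < \<beta>" and cf: "continuous_on {\<alpha>..\<beta>} f"
    and fpos: "\<forall>x\<in>{\<alpha>..\<beta>}. f x > 0"
  shows "\<exists>Q T. T > 0 \<and> Q 0 = q0 \<and> Q T = q1 \<and>
           (\<forall>t\<in>{0..T}. Q t \<in> {\<alpha>..\<beta>} \<and> (Q has_real_derivative f (Q t)) (at t))"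
proof -
  have cif: "continuous_on {\<alpha>..\<beta>} (\<lambda>x. 1 / f x)"
    using fpos by (intro continuous_intros cf) auto
  obtain G where G: "\<And>x. x \<in> {\<alpha>..\<beta>} \<Longrightarrow> (G has_vector_derivative 1 / f x) (at x within {\<alpha>..\<beta>})"
    using antiderivative_continuous[OF cif] by blast
  have cG: "continuous_on {\<alpha>..\<beta>} G"
    unfolding continuous_on_eq_continuous_within
    using G has_vector_derivative_continuous by blast
  have dG: "(G has_real_derivative 1 / f x) (at x)" if "\<alpha> < x" "x < \<beta>" for x
  proof -
    have "(G has_vector_derivative 1 / f x) (at x within {\<alpha>..\<beta>})" using G that by auto
    then show ?thesis using at_within_Icc_at[OF that] by (simp add: has_real_derivative_iff_has_vector_derivative)
  qed
  have mono: "G x < G y" if "\<alpha> \<le> x" "x < y" "y \<le> \<beta>" for x y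
  proof (rule DERIV_pos_imp_increasing_open[OF \<open>x < y\<close>])
    fix z assume "x < z" "z < y"
    then have "\<alpha> < z" "z < \<beta>" using that by auto
    then show "\<exists>d. (G has_real_derivative d) (at z) \<and> 0 < d"
      using dG fpos by (intro exI[of _ "1 / f z"]) auto
  next
    show "continuous_on {x..y} G" using cG by (rule continuous_on_subset) (use that in auto)
  qed
  have inj: "inj_on G {\<alpha>..\<beta>}"
    unfolding inj_on_def
  proof (intro ballI impI)
    fix x y assume "x \<in> {\<alpha>..\<beta>}" "y \<in> {\<alpha>..\<beta>}" "G x = G y"
    then show "x = y" using mono[of x y] mono[of y x] by (cases x y rule: linorder_cases) auto
  qed
  define Q where "Q = inv_into {\<alpha>..\<beta>} G"
  have QG: "Q (G x) = x" if "x \<in> {\<alpha>..\<beta>}" for x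
    unfolding Q_def using inv_into_f_f[OF inj that] .
  have img: "z \<in> G ` {\<alpha>..\<beta>}" if "G \<alpha> < z" "z < G \<beta>" for z
  proof -
    have "\<alpha> \<le> \<beta>" using ab by simp
    from IVT'[of G \<alpha> z \<beta>, OF _ _ this cG] that obtain x where "x \<ge> \<alpha>" "x \<le> \<beta>" "G x = z" by auto
    then show ?thesis by auto
  qed
  have GQ: "G (Q z) = z" if "G \<alpha> < z" "z < G \<beta>" for z
    unfolding Q_def using f_inv_into_f[OF img[OF that]] .
  have Qin: "Q z \<in> {\<alpha>..\<beta>}" if "G \<alpha> < z" "z < G \<beta>" for z
    unfolding Q_def using inv_into_into[OF img[OF that]] .
  have Qin2: "\<alpha> < Q z \<and> Q z < \<beta>" if "G \<alpha> < z" "z < G \<beta>" for z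
  proof -
    have "Q z \<noteq> \<alpha>" using GQ[OF that] that by auto
    moreover have "Q z \<noteq> \<beta>" using GQ[OF that] that by auto
    ultimately show ?thesis using Qin[OF that] by auto
  qed
  have cQ: "continuous_on (G ` {\<alpha>..\<beta>}) Q"
    unfolding Q_def by (rule continuous_on_inv[OF cG compact_Icc]) (use inv_into_f_f[OF inj] in auto)
  have sub: "{G \<alpha><..<G \<beta>} \<subseteq> G ` {\<alpha>..\<beta>}" using img by auto
  have isQ: "isCont Q z" if "G \<alpha> < z" "z < G \<beta>" for z
  proof -
    have "continuous_on {G \<alpha><..<G \<beta>} Q" using continuous_on_subset[OF cQ sub] .
    then show ?thesis using continuous_on_eq_continuous_at[of "{G \<alpha><..<G \<beta>}" Q] that by auto
  qed
  have dQ: "(Q has_real_derivative f (Q z)) (at z)" if z: "G \<alpha> < z" "z < G \<beta>" for z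
  proof -
    have "(G has_real_derivative 1 / f (Q z)) (at (Q z))" using dG Qin2[OF z] by auto
    moreover have "1 / f (Q z) \<noteq> 0"
    proof -
      have "f (Q z) > 0" using fpos Qin[OF z] by blast
      then show ?thesis by simp
    qed
    ultimately have "(Q has_real_derivative inverse (1 / f (Q z))) (at z)"
      by (rule DERIV_inverse_function[where a = "G \<alpha>" and b = "G \<beta>"]) (use z GQ isQ in auto)
    then show ?thesis by simp
  qed
  define g0 where "g0 = G q0"
  define g1 where "g1 = G q1"
  have g01: "G \<alpha> < g0" "g0 < g1" "g1 < G \<beta>" using mono ab by (auto simp: g0_def g1_def)
  show ?thesis
  proof (intro exI[of _ "\<lambda>t. Q (t + g0)"] exI[of _ "g1 - g0"] conjI ballI)
    show "g1 - g0 > 0" using g01 by simp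
    show "Q (0 + g0) = q0" using QG[of q0] ab by (simp add: g0_def)
    show "Q (g1 - g0 + g0) = q1" using QG[of q1] ab by (simp add: g1_def)
  next
    fix t assume t: "t \<in> {0..g1 - g0}"
    then have z: "G \<alpha> < t + g0" "t + g0 < G \<beta>" using g01 by auto
    show "Q (t + g0) \<in> {\<alpha>..\<beta>}" using Qin[OF z] .
    have d1: "(Q has_real_derivative f (Q (t + g0))) (at (t + g0))" using dQ[OF z] .
    have d2: "((\<lambda>t. t + g0) has_real_derivative 1) (at t)" by (auto intro!: derivative_eq_intros)
    show "((\<lambda>t. Q (t + g0)) has_real_derivative f (Q (t + g0))) (at t)"
      using DERIV_chain2[OF d1 d2] by simp
  qed
qed

lemma P_deriv:
  fixes Q :: "real \<Rightarrow> real"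
  assumes a: "a \<noteq> 0" and sg: "\<sigma> * \<sigma> = 1"
    and k: "k = - m1 / a" and A: "A = - m2 / (2 * a)" and B: "B = - b / (3 * a)"
    and dQ: "(Q has_real_derivative a * (\<sigma> * Q t * sqrt (k + A * (Q t)^2 + B * (Q t)^4))) (at t)"
    and pos: "k + A * (Q t)^2 + B * (Q t)^4 > 0"
  shows "((\<lambda>t. \<sigma> * Q t * sqrt (k + A * (Q t)^2 + B * (Q t)^4)) has_real_derivative
           - (b * (Q t)^5 + m1 * Q t + m2 * (Q t)^3)) (at t)"
proof -
  define q where "q = Q t"
  define \<psi> where "\<psi> = k + A * q^2 + B * q^4"
  define \<phi> where "\<phi> = sqrt \<psi>"
  have psi: "\<psi> > 0" using pos by (simp add: \<psi>_def q_def)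
  have phi: "\<phi> > 0" "\<phi> * \<phi> = \<psi>" using psi by (auto simp: \<phi>_def)
  define Q' where "Q' = a * (\<sigma> * q * \<phi>)"
  have dQ': "(Q has_real_derivative Q') (at t)" using dQ by (simp add: Q'_def \<phi>_def \<psi>_def q_def)
  have "((\<lambda>t. \<sigma> * Q t * sqrt (k + A * (Q t)^2 + B * (Q t)^4)) has_real_derivative
      \<sigma> * Q' * \<phi> + \<sigma> * q * ((2 * A * q * Q' + 4 * B * q^3 * Q') / (2 * \<phi>))) (at t)"
    using psi
    by (auto intro!: derivative_eq_intros dQ' simp: q_def \<phi>_def \<psi>_def field_simps eval_nat_numeral)
  moreover have "\<sigma> * Q' * \<phi> + \<sigma> * q * ((2 * A * q * Q' + 4 * B * q^3 * Q') / (2 * \<phi>))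
      = a * (\<sigma> * \<sigma>) * (q * (\<phi> * \<phi>) + q * q * (A * q + 2 * B * q^3))"
    using phi by (simp add: Q'_def field_simps eval_nat_numeral)
  moreover have "a * (\<sigma> * \<sigma>) * (q * (\<phi> * \<phi>) + q * q * (A * q + 2 * B * q^3))
      = - (b * q^5 + m1 * q + m2 * q^3)"
    unfolding sg phi(2) \<psi>_def k A B using a by (simp add: field_simps eval_nat_numeral)
  ultimately show ?thesis by (simp add: q_def)
qed

lemma poly_bound2:
  fixes u r A B :: real
  assumes "0 \<le> u" "u \<le> r" "r \<le> 1"
  shows "\<bar>A * u + B * u^2\<bar> \<le> (\<bar>A\<bar> + \<bar>B\<bar>) * r"
proof -
  have "\<bar>A * u + B * u^2\<bar> \<le> \<bar>A\<bar> * u + \<bar>B\<bar> * u^2"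
    using assms(1) by (simp add: abs_mult abs_triangle_ineq [THEN order_trans])
  moreover have "u^2 \<le> r"
  proof -
    have "u^2 = u * u" by (simp add: power2_eq_square)
    also have "\<dots> \<le> r * 1" using assms by (intro mult_mono) auto
    finally show ?thesis by simp
  qed
  moreover have "\<bar>A\<bar> * u \<le> \<bar>A\<bar> * r" using assms by (intro mult_left_mono) auto
  moreover have "\<bar>B\<bar> * u^2 \<le> \<bar>B\<bar> * r" using \<open>u^2 \<le> r\<close> by (intro mult_left_mono) auto
  ultimately show ?thesis by (simp add: algebra_simps)
qed

lemma sqrt_le_1_plus: "0 \<le> x \<Longrightarrow> sqrt x \<le> 1 + x"
proof -
  assume x: "0 \<le> x"
  have "x \<le> (1 + x)^2" using x by (simp add: power2_eq_square algebra_simps)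
  then have "sqrt x \<le> sqrt ((1 + x)^2)" by (rule real_sqrt_le_mono)
  also have "\<dots> = 1 + x" using x by simp
  finally show ?thesis .
qed

lemma FF_unstable:
  assumes am: "a * m1 < 0"
  shows "\<not> lyap_stable (FF a b m1 m2) 0"
proof
  assume st: "lyap_stable (FF a b m1 m2) 0"
  have a: "a \<noteq> 0" using am by auto
  define k where "k = - m1 / a"
  have "k = (- (a * m1)) / (a * a)" using a by (simp add: k_def)
  moreover have "0 < (- (a * m1)) / (a * a)"
  proof (rule divide_pos_pos)
    show "0 < - (a * m1)" using am by simp
    show "0 < a * a" using a by (simp add: zero_less_mult_iff linorder_neq_iff, blast)
  qed
  ultimately have k: "k > 0" by (simp only:)
  define A where "A = - m2 / (2 * a)"
  define B where "B = - b / (3 * a)"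
  define \<sigma> where "\<sigma> = sgn a"
  have sg: "\<sigma> * \<sigma> = 1" using a by (simp add: \<sigma>_def sgn_if)
  have asg: "a * \<sigma> = \<bar>a\<bar>" by (simp add: \<sigma>_def abs_sgn mult.commute)
  define \<psi> where "\<psi> = (\<lambda>q::real. k + A * q^2 + B * q^4)"
  define P where "P = (\<lambda>q. \<sigma> * q * sqrt (\<psi> q))"
  define r where "r = min 1 (k / (2 * (\<bar>A\<bar> + \<bar>B\<bar> + 1)))"
  have r: "r > 0" "r \<le> 1" "(\<bar>A\<bar> + \<bar>B\<bar>) * r \<le> k / 2"
  proof -
    show "r > 0" "r \<le> 1" using k by (auto simp: r_def)
    have "(\<bar>A\<bar> + \<bar>B\<bar>) * r \<le> (\<bar>A\<bar> + \<bar>B\<bar> + 1) * (k / (2 * (\<bar>A\<bar> + \<bar>B\<bar> + 1)))"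
      using \<open>r > 0\<close> by (intro mult_mono) (auto simp: r_def)
    also have "\<dots> = k / 2"
    proof -
      have "\<bar>A\<bar> + \<bar>B\<bar> + 1 \<noteq> 0" by (smt (verit) abs_ge_zero)
      then show ?thesis by (simp add: field_simps)
    qed
    finally show "(\<bar>A\<bar> + \<bar>B\<bar>) * r \<le> k / 2" .
  qed
  define R where "R = sqrt r"
  have R: "R > 0" "R \<le> 1" "R * R = r" using r by (auto simp: R_def)
  have psib: "k / 2 \<le> \<psi> q \<and> \<psi> q \<le> 3 * k / 2" if "\<bar>q\<bar> \<le> R" for q
  proof -
    define u where "u = q^2"
    have u: "0 \<le> u" "u \<le> r"
    proof -
      show "0 \<le> u" by (simp add: u_def)
      have "q^2 \<le> R^2" using that by (metis abs_ge_zero power2_abs power_mono)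
      then show "u \<le> r" using R by (simp add: u_def power2_eq_square)
    qed
    have pu: "\<psi> q = k + (A * u + B * u^2)"
      by (simp add: \<psi>_def u_def flip: power_mult)
    have "\<bar>A * u + B * u^2\<bar> \<le> k / 2" using poly_bound2[OF u r(2), of A B] r(3) by linarith
    then have "A * u + B * u^2 \<le> k / 2" "- (A * u + B * u^2) \<le> k / 2"
      using abs_le_D1 abs_le_D2 by blast+
    then show ?thesis unfolding pu by linarith
  qed
  define \<epsilon> where "\<epsilon> = R / 2"
  have "\<epsilon> > 0" using R by (simp add: \<epsilon>_def)
  from mp[OF st[unfolded lyap_stable_def, THEN spec, of \<epsilon>] this]
  obtain \<delta> where d: "\<delta> > 0" and dst: "\<forall>s T y. s \<le> 0 \<and> 0 \<le> T \<and>
      (\<forall>t\<in>{s..T}. (y has_vector_derivative FF a b m1 m2 (y t)) (at t within {s..T})) \<and>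
      dist (y 0) 0 < \<delta> \<longrightarrow> (\<forall>t\<in>{s..T}. dist (y t) 0 < \<epsilon>)"
    by blast
  define C where "C = 2 + 3 * k / 2"
  have C: "C > 0" using k by (simp add: C_def)
  define q0 where "q0 = min (R / 4) (\<delta> / (2 * C))"
  have q0: "0 < q0" "q0 \<le> R / 4" "q0 * C \<le> \<delta> / 2"
  proof -
    show "0 < q0" "q0 \<le> R / 4" using R d C by (auto simp: q0_def)
    have "q0 * C \<le> (\<delta> / (2 * C)) * C" using C by (intro mult_right_mono) (auto simp: q0_def)
    also have "\<dots> = \<delta> / 2" using C by simp
    finally show "q0 * C \<le> \<delta> / 2" .
  qed
  define f where "f = (\<lambda>q. a * P q)"
  have fpos: "\<forall>x\<in>{q0/2..R}. f x > 0"
  proof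
    fix x assume x: "x \<in> {q0/2..R}"
    then have "x > 0" "\<bar>x\<bar> \<le> R" using q0 by auto
    then have "\<psi> x > 0" using psib[of x] k by auto
    then have "\<bar>a\<bar> * x * sqrt (\<psi> x) > 0" using a \<open>x > 0\<close> by simp
    moreover have "f x = \<bar>a\<bar> * x * sqrt (\<psi> x)" unfolding f_def P_def asg[symmetric] by (simp add: mult.assoc)
    ultimately show "f x > 0" by simp
  qed
  have cf: "continuous_on {q0/2..R} f"
    unfolding f_def P_def \<psi>_def by (intro continuous_intros)
  have ab: "q0/2 < q0" "q0 < R/2" "R/2 < R" using q0 R by auto
  obtain Q T where QT: "T > 0" "Q 0 = q0" "Q T = R/2"
     "\<forall>t\<in>{0..T}. Q t \<in> {q0/2..R} \<and> (Q has_real_derivative f (Q t)) (at t)"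
    using scalar_ode_solution[OF ab cf fpos] by blast
  define y where "y = (\<lambda>t. (Q t, P (Q t)))"
  have deriv: "(y has_vector_derivative FF a b m1 m2 (y t)) (at t within {0..T})" if t: "t \<in> {0..T}" for t
  proof -
    have Qt: "Q t \<in> {q0/2..R}" and dQ: "(Q has_real_derivative f (Q t)) (at t)" using QT t by auto
    have "\<bar>Q t\<bar> \<le> R" using Qt q0 by auto
    then have "k / 2 \<le> \<psi> (Q t)" using psib by blast
    then have pos: "k + A * (Q t)^2 + B * (Q t)^4 > 0" using k unfolding \<psi>_def by linarith
    have dQ': "(Q has_real_derivative a * (\<sigma> * Q t * sqrt (k + A * (Q t)^2 + B * (Q t)^4))) (at t)"
      using dQ unfolding f_def P_def \<psi>_def .
    have d2: "((\<lambda>t. P (Q t)) has_real_derivative - (b * (Q t)^5 + m1 * Q t + m2 * (Q t)^3)) (at t)"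
      using P_deriv[OF a sg k_def A_def B_def dQ' pos] unfolding P_def \<psi>_def .
    have "(y has_vector_derivative (f (Q t), - (b * (Q t)^5 + m1 * Q t + m2 * (Q t)^3))) (at t)"
      unfolding y_def
      by (rule has_vector_derivative_Pair)
         (use dQ d2 in \<open>simp_all add: has_real_derivative_iff_has_vector_derivative\<close>)
    moreover have "FF a b m1 m2 (y t) = (f (Q t), - (b * (Q t)^5 + m1 * Q t + m2 * (Q t)^3))"
      by (simp add: FF_def y_def f_def)
    ultimately show ?thesis
      by (simp add: has_vector_derivative_at_within)
  qed
  have y0: "dist (y 0) 0 < \<delta>"
  proof -
    have "\<bar>q0\<bar> \<le> R" using q0 by simp
    then have "k / 2 \<le> \<psi> q0 \<and> \<psi> q0 \<le> 3 * k / 2" by (rule psib)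
    then have "\<psi> q0 \<le> 3 * k / 2" "0 \<le> \<psi> q0" using k by linarith+
    then have sq: "sqrt (\<psi> q0) \<le> 1 + 3 * k / 2" using sqrt_le_1_plus[of "\<psi> q0"] by linarith
    have "\<bar>P q0\<bar> = q0 * sqrt (\<psi> q0)"
      using sg q0 \<open>0 \<le> \<psi> q0\<close> unfolding P_def by (simp add: abs_mult \<sigma>_def abs_sgn_eq a)
    also have "\<dots> \<le> q0 * (1 + 3 * k / 2)" using sq q0 by (intro mult_left_mono) auto
    finally have "\<bar>P q0\<bar> \<le> q0 * (1 + 3 * k / 2)" .
    moreover have "norm (y 0) \<le> \<bar>q0\<bar> + \<bar>P q0\<bar>" using norm_Pair_le[of q0 "P q0"] QT by (simp add: y_def)
    ultimately have "norm (y 0) \<le> q0 * C" using q0 by (simp add: C_def algebra_simps)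
    then show ?thesis using q0 d by simp
  qed
  have pre: "0 \<le> (0::real) \<and> 0 \<le> T \<and> (\<forall>t\<in>{0..T}. (y has_vector_derivative FF a b m1 m2 (y t)) (at t within {0..T})) \<and>
      dist (y 0) 0 < \<delta>" using deriv y0 QT(1) by simp
  have "\<forall>t\<in>{0..T}. dist (y t) 0 < \<epsilon>"
    using mp[OF spec[OF spec[OF spec[OF dst, of 0], of T], of y] pre] .
  then have "norm (y T) < \<epsilon>" using QT by auto
  moreover have "\<bar>Q T\<bar> \<le> norm (y T)" unfolding y_def by (simp add: norm_Pair real_le_rsqrt)
  ultimately show False using QT R by (simp add: \<epsilon>_def)
qed

lemma FF_deriv:
  "(FF a b m1 m2 has_derivative (\<lambda>h. (a * snd h, - ((5 * b * (fst x)^4 + m1 + 3 * m2 * (fst x)^2) * fst h)))) (at x)"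
  unfolding FF_def
  apply (rule has_derivative_Pair)
  apply (auto intro!: derivative_eq_intros simp: algebra_simps)
  done

lemma eig_sq:
  assumes L: "(F has_derivative L) (at x)" and L10: "L (1,0) = (0, -W)" and L01: "L (0,1) = (a, 0)"
    and a: "a \<noteq> 0" and e: "e \<in> lin_eigenvalues F x"
  shows "e * e = complex_of_real (- a * W)"
proof -
  obtain L' v1 v2 where L': "(F has_derivative L') (at x)" and v: "(v1, v2) \<noteq> (0, 0)"
    and e1: "of_real (fst (L' (1, 0))) * v1 + of_real (fst (L' (0, 1))) * v2 = e * v1"
    and e2: "of_real (snd (L' (1, 0))) * v1 + of_real (snd (L' (0, 1))) * v2 = e * v2"
    using e unfolding lin_eigenvalues_def by blast
  have "L' = L" using has_derivative_unique[OF L' L] .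
  then have e1': "of_real a * v2 = e * v1" and e2': "- of_real W * v1 = e * v2"
    using e1 e2 L10 L01 by auto
  have v1: "v1 \<noteq> 0"
  proof
    assume "v1 = 0"
    then have "v2 = 0" using e1' a by simp
    then show False using v \<open>v1 = 0\<close> by simp
  qed
  have "e * e * v1 = of_real a * (e * v2)" using e1' by (simp add: algebra_simps)
  also have "\<dots> = of_real a * (- of_real W * v1)" by (simp only: e2')
  also have "\<dots> = of_real (- a * W) * v1" by simp
  finally have "e * e * v1 = of_real (- a * W) * v1" .
  then show ?thesis using mult_right_cancel[OF v1] by blast
qed

lemma centre_of:
  assumes L: "(F has_derivative L) (at x)" and L10: "L (1,0) = (0, -W)" and L01: "L (0,1) = (a, 0)"
    and a: "a \<noteq> 0" and aW: "a * W > 0"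
  shows "is_centre F x"
  unfolding is_centre_def
proof
  show "F differentiable at x" using L by (rule differentiableI)
  show "\<forall>e\<in>lin_eigenvalues F x. e \<noteq> 0 \<and> Re e = 0"
  proof
    fix e assume "e \<in> lin_eigenvalues F x"
    from eig_sq[OF L L10 L01 a this] have ee: "e * e = complex_of_real (- a * W)" .
    then have re: "Re e * Re e - Im e * Im e = - a * W" and im: "Re e * Im e + Im e * Re e = 0"
      by (simp_all add: complex_eq_iff)
    have "Re e = 0"
    proof (rule ccontr)
      assume "Re e \<noteq> 0"
      then have "Im e = 0" using im by simp
      then show False using re aW by (simp add: \<open>Im e = 0\<close>) (smt (verit) zero_le_square)
    qed
    moreover have "e \<noteq> 0" using ee aW by auto
    ultimately show "e \<noteq> 0 \<and> Re e = 0" by simp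
  qed
qed

lemma saddle_of:
  assumes L: "(F has_derivative L) (at x)" and L10: "L (1,0) = (0, -W)" and L01: "L (0,1) = (a, 0)"
    and a: "a \<noteq> 0" and aW: "a * W < 0"
  shows "is_saddle F x"
  unfolding is_saddle_def
proof
  show "F differentiable at x" using L by (rule differentiableI)
  show "\<forall>e\<in>lin_eigenvalues F x. Re e \<noteq> 0"
  proof
    fix e assume "e \<in> lin_eigenvalues F x"
    from eig_sq[OF L L10 L01 a this] have ee: "e * e = complex_of_real (- a * W)" .
    then have re: "Re e * Re e - Im e * Im e = - a * W"
      by (simp_all add: complex_eq_iff)
    show "Re e \<noteq> 0"
    proof
      assume "Re e = 0"
      then have "- (Im e * Im e) = - a * W" using re by simp
      moreover have "Im e * Im e \<ge> 0" by simp
      ultimately show False using aW by linarith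
    qed
  qed
qed
lemma quad_root:
  fixes b m1 m2 :: real
  assumes b: "b \<noteq> 0" and m: "m1 * m2 < 0" and small: "8 * \<bar>b\<bar> * \<bar>m1\<bar> \<le> m2^2"
  shows "\<exists>X. X > 0 \<and> b * X^2 + m2 * X + m1 = 0 \<and> X \<le> 2 * \<bar>m1\<bar> / \<bar>m2\<bar> \<and> \<bar>2 * b * X\<bar> \<le> \<bar>m2\<bar> / 2"
proof -
  have m2: "m2 \<noteq> 0" using m by auto
  define D where "D = m2^2 - 4 * b * m1"
  have "4 * b * m1 \<le> 4 * \<bar>b\<bar> * \<bar>m1\<bar>" by (simp add: abs_mult[symmetric] mult.assoc)
  moreover have "0 \<le> \<bar>b\<bar> * \<bar>m1\<bar>" by simp
  ultimately have D: "D \<ge> 0" using small unfolding D_def by linarith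
  have sD: "sqrt D \<ge> 0" using D by simp
  have am2: "\<bar>m2\<bar> > 0" using m2 by simp
  define \<sigma> where "\<sigma> = sgn m2"
  have sg: "\<sigma> * \<sigma> = 1" "\<sigma> * m2 = \<bar>m2\<bar>" using m2 by (auto simp: \<sigma>_def sgn_if)
  define S where "S = m2 + \<sigma> * sqrt D"
  have Ss: "S * \<sigma> = \<bar>m2\<bar> + sqrt D" using sg by (simp add: S_def algebra_simps)
  have absS: "\<bar>S\<bar> = \<bar>m2\<bar> + sqrt D"
  proof -
    have "\<bar>S\<bar> = \<bar>S * \<sigma>\<bar>" using sg m2 by (simp add: abs_mult \<sigma>_def)
    then show ?thesis using Ss D by simp
  qed
  have aS: "\<bar>S\<bar> > 0" using absS sD am2 by linarith
  then have S0: "S \<noteq> 0" by simp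
  have m1s: "m1 * \<sigma> < 0"
  proof -
    have eq: "\<sigma> * \<bar>m2\<bar> = m2" by (simp add: \<sigma>_def sgn_mult_abs)
    have "m1 * \<sigma> * \<bar>m2\<bar> = m1 * m2" by (simp only: mult.assoc eq)
    then have "m1 * \<sigma> * \<bar>m2\<bar> < 0" using m by linarith
    then show ?thesis using am2 by (simp add: mult_less_0_iff)
  qed
  have m1S: "m1 * S < 0"
  proof -
    have "(m1 * \<sigma>) * (S * \<sigma>) = m1 * S * (\<sigma> * \<sigma>)" by (simp add: algebra_simps)
    then have eq: "(m1 * \<sigma>) * (S * \<sigma>) = m1 * S" using sg(1) by simp
    moreover have "S * \<sigma> > 0" using Ss sD am2 by linarith
    then have "(m1 * \<sigma>) * (S * \<sigma>) < 0" using m1s by (rule mult_neg_pos[rotated])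
    ultimately show ?thesis by linarith
  qed
  define X where "X = - 2 * m1 / S"
  have Xpos: "X > 0"
  proof -
    have "X = (- 2 * (m1 * S)) / (S * S)" using S0 by (simp add: X_def)
    moreover have "0 < (- 2 * (m1 * S)) / (S * S)"
    proof (rule divide_pos_pos)
      show "S * S > 0" using S0 by (simp add: zero_less_mult_iff linorder_neq_iff, blast)
      show "0 < - 2 * (m1 * S)" using m1S by linarith
    qed
    ultimately show ?thesis by (simp only:)
  qed
  have root: "b * X^2 + m2 * X + m1 = 0"
  proof -
    have "(S - m2)^2 = (\<sigma> * \<sigma>) * (sqrt D * sqrt D)" by (simp add: S_def power2_eq_square algebra_simps)
    also have "\<dots> = D" using sg(1) D by simp
    finally have "(S - m2)^2 = D" .
    then have e: "S^2 - 2 * m2 * S + 4 * b * m1 = 0" by (simp add: D_def power2_eq_square algebra_simps)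
    have "b * X^2 + m2 * X + m1 = m1 * (S^2 - 2 * m2 * S + 4 * b * m1) / S^2"
      using S0 by (simp add: X_def field_simps power2_eq_square)
    then show ?thesis using e by simp
  qed
  have Xb: "X \<le> 2 * \<bar>m1\<bar> / \<bar>m2\<bar>"
  proof -
    have "X = \<bar>X\<bar>" using Xpos by simp
    also have "\<dots> = 2 * \<bar>m1\<bar> / \<bar>S\<bar>" by (simp add: X_def abs_mult)
    also have "\<dots> \<le> 2 * \<bar>m1\<bar> / \<bar>m2\<bar>" proof (rule divide_left_mono)
      show "\<bar>m2\<bar> \<le> \<bar>S\<bar>" using absS sD by linarith
      show "0 < \<bar>S\<bar> * \<bar>m2\<bar>" using aS am2 by (rule mult_pos_pos)
    qed simp
    finally show ?thesis .
  qed
  have "\<bar>2 * b * X\<bar> = 2 * \<bar>b\<bar> * X" using Xpos by (simp add: abs_mult)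
  also have "\<dots> \<le> 2 * \<bar>b\<bar> * (2 * \<bar>m1\<bar> / \<bar>m2\<bar>)" using Xb by (rule mult_left_mono) simp
  also have "\<dots> = (4 * \<bar>b\<bar> * \<bar>m1\<bar>) / \<bar>m2\<bar>" by simp
  also have "\<dots> \<le> (m2^2 / 2) / \<bar>m2\<bar>"
  proof (rule divide_right_mono)
    show "4 * \<bar>b\<bar> * \<bar>m1\<bar> \<le> m2^2 / 2" using small by linarith
  qed simp
  also have "\<dots> = \<bar>m2\<bar> / 2"
  proof -
    have "m2^2 = \<bar>m2\<bar> * \<bar>m2\<bar>" by (simp add: power2_eq_square)
    then have "(m2^2 / 2) / \<bar>m2\<bar> = (\<bar>m2\<bar> * \<bar>m2\<bar> / 2) / \<bar>m2\<bar>" by (simp only:)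
    also have "\<dots> = \<bar>m2\<bar> / 2" using am2 by (simp del: abs_mult_self_eq)
    finally show ?thesis .
  qed
  finally show ?thesis using Xpos root Xb by blast
qed
lemma abs_same_sign: fixes x y :: real shows "0 < x * y \<Longrightarrow> \<bar>x\<bar> \<le> \<bar>x + y\<bar>"
  by (cases "x > 0") (auto simp: zero_less_mult_iff abs_if)

lemma FF_nosing:
  assumes a: "a \<noteq> 0" and b: "b \<noteq> 0" and m: "m1 * m2 > 0" and x: "x \<noteq> 0"
    and sm: "(fst x)^2 < \<bar>m2\<bar> / \<bar>b\<bar>"
  shows "FF a b m1 m2 x \<noteq> 0"
proof
  assume F0: "FF a b m1 m2 x = 0"
  then have p: "snd x = 0" using a by (simp add: FF_def prod_eq_iff)
  have eq: "b * (fst x)^5 + m1 * fst x + m2 * (fst x)^3 = 0" using F0 by (simp add: FF_def prod_eq_iff)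
  define q where "q = fst x"
  have q: "q \<noteq> 0" using x p by (auto simp: q_def prod_eq_iff)
  define u where "u = q^2"
  have u: "u > 0" using q by (simp add: u_def)
  have "q * (b * u * u + (m2 * u + m1)) = 0" using eq
    by (simp add: u_def q_def power2_eq_square algebra_simps eval_nat_numeral)
  then have e2: "b * u * u = - (m2 * u + m1)" using q by simp
  have "(m2 * u) * m1 = (m1 * m2) * u" by (simp add: algebra_simps)
  moreover have "0 < (m1 * m2) * u" using m u by (rule mult_pos_pos)
  ultimately have "0 < (m2 * u) * m1" by (simp only:)
  then have "\<bar>m2 * u\<bar> \<le> \<bar>m2 * u + m1\<bar>" by (rule abs_same_sign)
  also have "\<dots> = \<bar>b * u * u\<bar>" using e2 by simp
  finally have "\<bar>m2\<bar> * u \<le> (\<bar>b\<bar> * u) * u" using u by (simp add: abs_mult)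
  then have "\<bar>m2\<bar> \<le> \<bar>b\<bar> * u" using u by simp
  then have "\<bar>m2\<bar> / \<bar>b\<bar> \<le> u" using b by (simp add: divide_le_eq mult.commute)
  then show False using sm by (simp add: u_def q_def)
qed

lemma FF_sing:
  assumes a: "a \<noteq> 0" and b: "b \<noteq> 0" and m: "m1 * m2 < 0" and small: "8 * \<bar>b\<bar> * \<bar>m1\<bar> \<le> m2^2"
  shows "\<exists>c. c \<noteq> 0 \<and> FF a b m1 m2 c = 0 \<and> norm c \<le> sqrt (2 * \<bar>m1\<bar> / \<bar>m2\<bar>) \<and>
     (a * m2 > 0 \<longrightarrow> is_centre (FF a b m1 m2) c) \<and> (a * m2 < 0 \<longrightarrow> is_saddle (FF a b m1 m2) c)"
proof -
  obtain X where X: "X > 0" "b * X^2 + m2 * X + m1 = 0" "X \<le> 2 * \<bar>m1\<bar> / \<bar>m2\<bar>" "\<bar>2 * b * X\<bar> \<le> \<bar>m2\<bar> / 2"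
    using quad_root[OF b m small] by blast
  define q where "q = sqrt X"
  have q: "q > 0" "q^2 = X" using X by (auto simp: q_def)
  have q4: "q^4 = X^2"
  proof -
    have "q^4 = (q^2)^2" by (simp flip: power_mult)
    then show ?thesis using q(2) by simp
  qed
  define c where "c = (q, 0::real)"
  define W where "W = 5 * b * q^4 + m1 + 3 * m2 * q^2"
  have c0: "c \<noteq> 0" using q by (simp add: c_def prod_eq_iff)
  have "b * q^5 + m1 * q + m2 * q^3 = q * (b * q^4 + m1 + m2 * q^2)" by (simp add: algebra_simps eval_nat_numeral)
  also have "\<dots> = q * (b * X^2 + m2 * X + m1)" using q q4 by (simp add: algebra_simps)
  also have "\<dots> = 0" using X by simp
  finally have Fc: "FF a b m1 m2 c = 0" by (simp add: FF_def c_def zero_prod_def)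
  have nc: "norm c \<le> sqrt (2 * \<bar>m1\<bar> / \<bar>m2\<bar>)"
  proof -
    have "norm c = sqrt X" using X(1) by (simp add: c_def q_def)
    also have "\<dots> \<le> sqrt (2 * \<bar>m1\<bar> / \<bar>m2\<bar>)" using X(3) by (rule real_sqrt_le_mono)
    finally show ?thesis .
  qed
  have L: "(FF a b m1 m2 has_derivative (\<lambda>h. (a * snd h, - ((5 * b * (fst c)^4 + m1 + 3 * m2 * (fst c)^2) * fst h)))) (at c)"
    by (rule FF_deriv)
  have L10: "(\<lambda>h. (a * snd h, - ((5 * b * (fst c)^4 + m1 + 3 * m2 * (fst c)^2) * fst h))) (1, 0) = (0, - W)"
    by (simp add: c_def W_def)
  have L01: "(\<lambda>h. (a * snd h, - ((5 * b * (fst c)^4 + m1 + 3 * m2 * (fst c)^2) * fst h))) (0, 1) = (a, 0)"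
    by simp
  have "W = 5 * b * X^2 + m1 + 3 * m2 * X" using q q4 by (simp add: W_def)
  also have "\<dots> = 2 * X * (m2 + 2 * b * X) + (b * X^2 + m2 * X + m1)" by (simp add: algebra_simps power2_eq_square)
  also have "\<dots> = 2 * X * (m2 + 2 * b * X)" using X(2) by simp
  finally have W: "a * W = 2 * X * (a * m2 + a * (2 * b * X))" by (simp add: algebra_simps)
  have aerr: "\<bar>a * (2 * b * X)\<bar> \<le> \<bar>a\<bar> * (\<bar>m2\<bar> / 2)"
    unfolding abs_mult[of a] using X(4) by (rule mult_left_mono) simp
  have am: "\<bar>a * m2\<bar> = \<bar>a\<bar> * \<bar>m2\<bar>" by (simp add: abs_mult)
  show ?thesis
  proof (intro exI[of _ c] conjI impI)
    show "c \<noteq> 0" "FF a b m1 m2 c = 0" "norm c \<le> sqrt (2 * \<bar>m1\<bar> / \<bar>m2\<bar>)" by fact+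
  next
    assume pos: "a * m2 > 0"
    then have "\<bar>a * m2\<bar> = a * m2" by simp
    then have "a * m2 + a * (2 * b * X) > 0" using pos aerr am abs_le_D2[OF aerr] by linarith
    then have "a * W > 0" using W X(1) by simp
    then show "is_centre (FF a b m1 m2) c" by (rule centre_of[OF L L10 L01 a])
  next
    assume neg: "a * m2 < 0"
    then have "\<bar>a * m2\<bar> = - (a * m2)" by simp
    then have "a * m2 + a * (2 * b * X) < 0" using neg aerr am abs_le_D1[OF aerr] by linarith
    then have "a * W < 0" using W X(1) by (simp add: mult_pos_neg)
    then show "is_saddle (FF a b m1 m2) c" by (rule saddle_of[OF L L10 L01 a])
  qed
qed

lemma sgn_prod_eq: fixes x y N :: real shows "(x * N) * (y * N) = (x * y) * (N * N)"
  by (simp add: algebra_simps)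

lemma sq_pos: fixes N :: real shows "N \<noteq> 0 \<Longrightarrow> N * N > 0"
  by (simp add: zero_less_mult_iff linorder_neq_iff, blast)

lemma sgnA: fixes x y N :: real assumes "N \<noteq> 0" "x * N < 0" "y * N > 0" shows "x * y < 0"
proof (rule ccontr)
  assume "\<not> x * y < 0"
  then have "0 \<le> (x * y) * (N * N)" using sq_pos[OF assms(1)] by simp
  moreover have "(x * N) * (y * N) < 0" using assms(2,3) by (rule mult_neg_pos)
  ultimately show False using sgn_prod_eq[of x N y] by linarith
qed

lemma sgnA': fixes x y N :: real assumes "N \<noteq> 0" "x * N > 0" "y * N < 0" shows "x * y < 0"
  using sgnA[OF assms(1,3,2)] by (simp add: mult.commute)

lemma sgnB: fixes x y N :: real assumes "N \<noteq> 0" "x * N > 0" "y * N > 0" shows "x * y > 0"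
proof (rule ccontr)
  assume "\<not> x * y > 0"
  then have "(x * y) * (N * N) \<le> 0" using sq_pos[OF assms(1)] by (simp add: mult_nonpos_nonneg)
  moreover have "(x * N) * (y * N) > 0" using assms(2,3) by (rule mult_pos_pos)
  ultimately show False using sgn_prod_eq[of x N y] by linarith
qed

lemma sgnC: fixes x y N :: real assumes "N \<noteq> 0" "x * N < 0" "y * N < 0" shows "x * y > 0"
proof (rule ccontr)
  assume "\<not> x * y > 0"
  then have "(x * y) * (N * N) \<le> 0" using sq_pos[OF assms(1)] by (simp add: mult_nonpos_nonneg)
  moreover have "(x * N) * (y * N) > 0" using assms(2,3) by (rule mult_neg_neg)
  ultimately show False using sgn_prod_eq[of x N y] by linarith
qed

lemma flip_generic:
  fixes n1 n2 :: "real \<Rightarrow> real" and N \<epsilon> \<sigma> :: real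
  assumes a: "a \<noteq> 0" and b: "b \<noteq> 0" and N: "N \<noteq> 0" and eps: "\<epsilon> > 0" and sig: "\<sigma> \<in> {-1, 1}"
    and before: "\<And>j. 0 < \<sigma> * (j0 - j) \<Longrightarrow> \<sigma> * (j0 - j) < \<epsilon> \<Longrightarrow>
        n1 j * N > 0 \<and> n2 j * N > 0 \<and> \<bar>N\<bar> / 2 \<le> \<bar>n2 j\<bar>"
    and after: "\<And>j. 0 < \<sigma> * (j - j0) \<Longrightarrow> \<sigma> * (j - j0) < \<epsilon> \<Longrightarrow>
        n1 j * N < 0 \<and> n2 j * N > 0 \<and> \<bar>N\<bar> / 2 \<le> \<bar>n2 j\<bar> \<and> 8 * \<bar>b\<bar> * \<bar>n1 j\<bar> \<le> (n2 j)^2"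
    and lim: "(n1 \<longlongrightarrow> 0) (at j0)"
    and dual: "dual \<longleftrightarrow> a * N < 0" and nz: "a * N \<noteq> 0"
  shows "flip_bif dual (\<lambda>j. FF a b (n1 j) (n2 j)) j0"
  unfolding flip_bif_def
proof (intro conjI allI)
  fix j show "FF a b (n1 j) (n2 j) 0 = 0" by (simp add: FF_def zero_prod_def)
next
  define r where "r = sqrt (\<bar>N\<bar> / (2 * \<bar>b\<bar>))"
  have r: "r > 0" "r * r = \<bar>N\<bar> / (2 * \<bar>b\<bar>)" using N b by (auto simp: r_def)
  define P where "P = (\<lambda>j c. c \<noteq> 0 \<and> FF a b (n1 j) (n2 j) c = 0 \<and> norm c \<le> sqrt (2 * \<bar>n1 j\<bar> / \<bar>n2 j\<bar>) \<and>
     (a * n2 j > 0 \<longrightarrow> is_centre (FF a b (n1 j) (n2 j)) c) \<and> (a * n2 j < 0 \<longrightarrow> is_saddle (FF a b (n1 j) (n2 j)) c))"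
  have exP: "\<exists>c. P j c" if "0 < \<sigma> * (j - j0)" "\<sigma> * (j - j0) < \<epsilon>" for j
  proof -
    have A: "n1 j * N < 0" "n2 j * N > 0" "8 * \<bar>b\<bar> * \<bar>n1 j\<bar> \<le> (n2 j)^2" using after[OF that] by auto
    have "n1 j * n2 j < 0" using sgnA[OF N A(1,2)] .
    from FF_sing[OF a b this A(3)] show ?thesis unfolding P_def .
  qed
  define c where "c = (\<lambda>j. SOME x. P j x)"
  have cP: "P j (c j)" if "0 < \<sigma> * (j - j0)" "\<sigma> * (j - j0) < \<epsilon>" for j
    unfolding c_def using someI_ex[OF exP[OF that]] .
  show "\<exists>\<epsilon>>0. \<exists>r>0. \<exists>\<sigma>\<in>{-1, 1::real}.
        (\<forall>j. 0 < \<sigma> * (j0 - j) \<and> \<sigma> * (j0 - j) < \<epsilon> \<longrightarrow>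
             (lyap_stable (FF a b (n1 j) (n2 j)) 0 \<longleftrightarrow> \<not> dual) \<and> (\<forall>x. x \<noteq> 0 \<and> norm x < r \<longrightarrow> FF a b (n1 j) (n2 j) x \<noteq> 0)) \<and>
        (\<forall>j. 0 < \<sigma> * (j - j0) \<and> \<sigma> * (j - j0) < \<epsilon> \<longrightarrow> (lyap_stable (FF a b (n1 j) (n2 j)) 0 \<longleftrightarrow> dual)) \<and>
        (\<exists>c. (\<forall>j. 0 < \<sigma> * (j - j0) \<and> \<sigma> * (j - j0) < \<epsilon> \<longrightarrow>
                 c j \<noteq> 0 \<and> FF a b (n1 j) (n2 j) (c j) = 0 \<and>
                 (if dual then is_saddle (FF a b (n1 j) (n2 j)) (c j) else is_centre (FF a b (n1 j) (n2 j)) (c j))) \<and>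
             (c \<longlongrightarrow> 0) (at j0 within {j. 0 < \<sigma> * (j - j0)}))"
  proof (rule exI[of _ \<epsilon>], rule conjI[OF eps], rule exI[of _ r], rule conjI[OF r(1)],
      rule bexI[of _ \<sigma>, OF _ sig], intro conjI allI impI exI[of _ c])
    fix j assume j: "0 < \<sigma> * (j0 - j) \<and> \<sigma> * (j0 - j) < \<epsilon>"
    have B: "n1 j * N > 0" "n2 j * N > 0" "\<bar>N\<bar> / 2 \<le> \<bar>n2 j\<bar>" using before j by auto
    show "lyap_stable (FF a b (n1 j) (n2 j)) 0 \<longleftrightarrow> \<not> dual"
    proof (cases "a * N < 0")
      case True
      have "a * n1 j < 0" using sgnA[OF N True B(1)] .
      then show ?thesis using FF_unstable dual True by blast
    next
      case False
      then have "a * N > 0" using nz by linarith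
      have "a * n1 j > 0" using sgnB[OF N \<open>a * N > 0\<close> B(1)] .
      then show ?thesis using FF_stable dual False by blast
    qed
  next
    fix j and x :: "real \<times> real" assume j: "0 < \<sigma> * (j0 - j) \<and> \<sigma> * (j0 - j) < \<epsilon>"
      and x: "x \<noteq> 0 \<and> norm x < r"
    have B: "n1 j * N > 0" "n2 j * N > 0" "\<bar>N\<bar> / 2 \<le> \<bar>n2 j\<bar>" using before j by auto
    {
      have "(fst x)^2 \<le> (norm x)^2" by (simp add: norm_sq_pair)
      also have "(norm x)^2 < r * r"
      proof -
        have "norm x * norm x < r * r" using x by (intro mult_strict_mono') auto
        then show ?thesis by (simp add: power2_eq_square)
      qed
      also have "r * r = \<bar>N\<bar> / 2 / \<bar>b\<bar>" using r by simp
      also have "\<dots> \<le> \<bar>n2 j\<bar> / \<bar>b\<bar>" using B(3) b by (intro divide_right_mono) auto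
      finally have "(fst x)^2 < \<bar>n2 j\<bar> / \<bar>b\<bar>" .
      moreover have "n1 j * n2 j > 0" using sgnB[OF N B(1,2)] .
      ultimately show "FF a b (n1 j) (n2 j) x \<noteq> 0" using FF_nosing[OF a b] x by blast
    }
  next
    fix j assume j: "0 < \<sigma> * (j - j0) \<and> \<sigma> * (j - j0) < \<epsilon>"
    have A: "n1 j * N < 0" "n2 j * N > 0" using after j by auto
    show "lyap_stable (FF a b (n1 j) (n2 j)) 0 \<longleftrightarrow> dual"
    proof (cases "a * N < 0")
      case True
      have "a * n1 j > 0" using sgnC[OF N True A(1)] .
      then show ?thesis using FF_stable dual True by blast
    next
      case False
      then have "a * N > 0" using nz by linarith
      have "a * n1 j < 0" using sgnA'[OF N \<open>a * N > 0\<close> A(1)] .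
      then show ?thesis using FF_unstable dual False by blast
    qed
  next
    fix j assume j: "0 < \<sigma> * (j - j0) \<and> \<sigma> * (j - j0) < \<epsilon>"
    have A: "n2 j * N > 0" using after j by auto
    have Pj: "P j (c j)" using cP j by auto
    show "c j \<noteq> 0" "FF a b (n1 j) (n2 j) (c j) = 0" using Pj unfolding P_def by auto
    show "if dual then is_saddle (FF a b (n1 j) (n2 j)) (c j) else is_centre (FF a b (n1 j) (n2 j)) (c j)"
    proof (cases "a * N < 0")
      case True
      have "a * n2 j < 0" using sgnA[OF N True A] .
      then show ?thesis using Pj dual True unfolding P_def by auto
    next
      case False
      then have "a * N > 0" using nz by linarith
      have "a * n2 j > 0" using sgnB[OF N \<open>a * N > 0\<close> A] .
      then show ?thesis using Pj dual False unfolding P_def by auto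
    qed
  next
    define g where "g = (\<lambda>j. sqrt (4 * \<bar>n1 j\<bar> / \<bar>N\<bar>))"
    have "(g \<longlongrightarrow> sqrt (4 * \<bar>0\<bar> / \<bar>N\<bar>)) (at j0)"
      unfolding g_def using N by (intro tendsto_intros lim) simp
    then have "(g \<longlongrightarrow> 0) (at j0)" by simp
    then have g0: "(g \<longlongrightarrow> 0) (at j0 within {j. 0 < \<sigma> * (j - j0)})"
      by (rule Lim_at_imp_Lim_at_within)
    have ev: "\<forall>\<^sub>F j in at j0 within {j. 0 < \<sigma> * (j - j0)}. norm (c j) \<le> g j"
      unfolding eventually_at
    proof (intro exI[of _ \<epsilon>] conjI ballI impI)
      show "\<epsilon> > 0" by fact
      fix j assume j: "j \<in> {j. 0 < \<sigma> * (j - j0)}" "j \<noteq> j0 \<and> dist j j0 < \<epsilon>"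
      have "\<bar>\<sigma> * (j - j0)\<bar> = \<bar>j - j0\<bar>" using sig by (auto simp: abs_mult)
      then have "\<sigma> * (j - j0) < \<epsilon>" using j by (simp add: dist_real_def)
      then have jj: "0 < \<sigma> * (j - j0)" "\<sigma> * (j - j0) < \<epsilon>" using j by auto
      have A: "\<bar>N\<bar> / 2 \<le> \<bar>n2 j\<bar>" using after[OF jj] by auto
      have Pj: "P j (c j)" using cP[OF jj] .
      then have "norm (c j) \<le> sqrt (2 * \<bar>n1 j\<bar> / \<bar>n2 j\<bar>)" unfolding P_def by auto
      also have "\<dots> \<le> g j" unfolding g_def
      proof (rule real_sqrt_le_mono)
        have "2 * \<bar>n1 j\<bar> / \<bar>n2 j\<bar> \<le> 2 * \<bar>n1 j\<bar> / (\<bar>N\<bar> / 2)"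
          using A N by (intro divide_left_mono) auto
        also have "\<dots> = 4 * \<bar>n1 j\<bar> / \<bar>N\<bar>" by simp
        finally show "2 * \<bar>n1 j\<bar> / \<bar>n2 j\<bar> \<le> 4 * \<bar>n1 j\<bar> / \<bar>N\<bar>" .
      qed
      finally show "norm (c j) \<le> g j" .
    qed
    show "(c \<longlongrightarrow> 0) (at j0 within {j. 0 < \<sigma> * (j - j0)})"
      by (rule Lim_null_comparison[OF ev g0])
  qed
qed

lemma ineq_contra:
  fixes J T C M d :: real
  assumes J: "J \<ge> 0" and T: "T > 0" and C: "C > 0" and M: "M > 0"
    and H1: "J * C / 2 \<le> M * T" and H2: "T * d / 2 \<le> M * (J * J)"
    and H3: "T < d * (C * C) / (8 * M^3)"
  shows False
proof -
  have J1: "J \<le> 2 * M * T / C" using H1 C by (simp add: field_simps)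
  have "J * J \<le> (2 * M * T / C) * (2 * M * T / C)" using J J1 by (intro mult_mono) auto
  then have "M * (J * J) \<le> M * ((2 * M * T / C) * (2 * M * T / C))" using M by (intro mult_left_mono) auto
  also have "\<dots> = 4 * M^3 * T * T / (C * C)" using C by (simp add: field_simps power3_eq_cube)
  finally have "T * d / 2 \<le> 4 * M^3 * T * T / (C * C)" using H2 by linarith
  then have "T * d * (C * C) \<le> 8 * M^3 * T * T" using C by (simp add: field_simps)
  then have "T * (d * (C * C)) \<le> T * (8 * M^3 * T)" by (simp add: algebra_simps)
  then have "d * (C * C) \<le> 8 * M^3 * T" using T by simp
  moreover have "T * (8 * M^3) < d * (C * C)" using H3 M by (simp add: field_simps)
  ultimately show False by (simp add: algebra_simps)
qed

lemma mvt_between: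
  fixes g g' :: "real \<Rightarrow> real"
  assumes "\<And>z. (g has_real_derivative g' z) (at z)"
  shows "\<exists>\<xi>. min x y \<le> \<xi> \<and> \<xi> \<le> max x y \<and> g y - g x = (y - x) * g' \<xi>"
proof (cases x y rule: linorder_cases)
  case less
  from MVT2[OF less, of g g'] assms obtain z where "x < z" "z < y" "g y - g x = (y - x) * g' z" by blast
  then show ?thesis using less by (intro exI[of _ z]) auto
next
  case equal
  then show ?thesis by (intro exI[of _ x]) auto
next
  case greater
  from MVT2[OF greater, of g g'] assms obtain z where "y < z" "z < x" "g x - g y = (x - y) * g' z" by blast
  then have "g y - g x = (y - x) * g' z" by (simp add: algebra_simps)
  then show ?thesis using greater \<open>y < z\<close> \<open>z < x\<close> by (intro exI[of _ z]) auto
qed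
lemma Ck2_cont: "Ck2 k f \<Longrightarrow> continuous_on UNIV (\<lambda>z. f (fst z) (snd z))"
  by (cases k) auto

lemma cont_box:
  fixes g :: "real \<Rightarrow> real \<Rightarrow> real"
  assumes cg: "continuous_on UNIV (\<lambda>z. g (fst z) (snd z))" and e: "\<epsilon> > 0"
  shows "\<exists>e>0. \<forall>j t. \<bar>j\<bar> < e \<and> \<bar>t\<bar> < e \<longrightarrow> \<bar>g j t - g 0 0\<bar> < \<epsilon>"
proof -
  have "isCont (\<lambda>z. g (fst z) (snd z)) (0, 0)"
    using cg continuous_on_eq_continuous_at[OF open_UNIV] by blast
  then obtain d where d: "d > 0" and dd: "\<And>z. dist z (0, 0) < d \<Longrightarrow> dist (g (fst z) (snd z)) (g 0 0) < \<epsilon>"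
    unfolding continuous_at_eps_delta using e by force
  show ?thesis
  proof (intro exI[of _ "d / 2"] conjI allI impI)
    show "d / 2 > 0" using d by simp
    fix j t :: real assume jt: "\<bar>j\<bar> < d / 2 \<and> \<bar>t\<bar> < d / 2"
    have "dist (j, t) (0, 0) = norm (j, t)" by (simp add: dist_norm)
    also have "\<dots> \<le> norm j + norm t" by (rule norm_Pair_le)
    also have "\<dots> < d" using jt by simp
    finally have "dist (g (fst (j, t)) (snd (j, t))) (g 0 0) < \<epsilon>" by (rule dd)
    then show "\<bar>g j t - g 0 0\<bar> < \<epsilon>" by (simp add: dist_real_def)
  qed
qed

lemma nu1_root_deriv:
  fixes \<nu>1 :: "real \<Rightarrow> real \<Rightarrow> real"
  assumes sm: "smooth2 \<nu>1" and h0: "\<nu>1 0 0 = 0" and h1: "deriv (\<lambda>j. \<nu>1 j 0) 0 = 0"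
    and h2: "deriv (deriv (\<lambda>j. \<nu>1 j 0)) 0 \<noteq> 0" and h3: "deriv (\<lambda>t. \<nu>1 0 t) 0 \<noteq> 0"
  shows "\<exists>\<delta>>0. \<forall>\<tau> j0. 0 < \<bar>\<tau>\<bar> \<and> \<bar>\<tau>\<bar> < \<delta> \<and> \<bar>j0\<bar> < \<delta> \<and> \<nu>1 j0 \<tau> = 0 \<longrightarrow>
           (\<exists>D. D \<noteq> 0 \<and> ((\<lambda>j. \<nu>1 j \<tau>) has_real_derivative D) (at j0))"
proof -
  have "Ck2 (Suc (Suc 0)) \<nu>1" using sm unfolding smooth2_def by blast
  then obtain f1 f2 where d1: "\<And>x y. ((\<lambda>s. \<nu>1 s y) has_real_derivative f1 x y) (at x)"
      and d2: "\<And>x y. ((\<lambda>s. \<nu>1 x s) has_real_derivative f2 x y) (at y)"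
      and c1: "Ck2 (Suc 0) f1" and c2: "Ck2 (Suc 0) f2"
    by auto
  from c1 obtain f11 f12 where d11: "\<And>x y. ((\<lambda>s. f1 s y) has_real_derivative f11 x y) (at x)"
      and d12: "\<And>x y. ((\<lambda>s. f1 x s) has_real_derivative f12 x y) (at y)"
      and c11: "Ck2 0 f11" and c12: "Ck2 0 f12"
    by auto
  have cf11: "continuous_on UNIV (\<lambda>z. f11 (fst z) (snd z))" using c11 by simp
  have cf12: "continuous_on UNIV (\<lambda>z. f12 (fst z) (snd z))" using c12 by simp
  have cf2: "continuous_on UNIV (\<lambda>z. f2 (fst z) (snd z))" using Ck2_cont[OF c2] .
  have dv: "deriv (\<lambda>j. \<nu>1 j 0) = (\<lambda>j. f1 j 0)"
    using d1 by (intro ext DERIV_imp_deriv) auto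
  have f100: "f1 0 0 = 0" using h1 dv by simp
  define c where "c = f11 0 0"
  have "deriv (\<lambda>j. f1 j 0) 0 = f11 0 0" using d11 by (intro DERIV_imp_deriv)
  then have c: "c \<noteq> 0" using h2 dv by (simp add: c_def)
  define d where "d = f2 0 0"
  have "deriv (\<lambda>t. \<nu>1 0 t) 0 = f2 0 0" using d2 by (intro DERIV_imp_deriv)
  then have d: "d \<noteq> 0" using h3 by (simp add: d_def)
  have "\<bar>c\<bar> / 2 > 0" using c by simp
  from cont_box[OF cf11 this] obtain e1 where e1: "e1 > 0"
    and b1: "\<And>j t. \<bar>j\<bar> < e1 \<Longrightarrow> \<bar>t\<bar> < e1 \<Longrightarrow> \<bar>f11 j t - c\<bar> < \<bar>c\<bar> / 2" unfolding c_def by blast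
  from cont_box[OF cf12, of 1] obtain e2 where e2: "e2 > 0"
    and b2: "\<And>j t. \<bar>j\<bar> < e2 \<Longrightarrow> \<bar>t\<bar> < e2 \<Longrightarrow> \<bar>f12 j t - f12 0 0\<bar> < 1" by auto
  have "\<bar>d\<bar> / 2 > 0" using d by simp
  from cont_box[OF cf2 this] obtain e3 where e3: "e3 > 0"
    and b3: "\<And>j t. \<bar>j\<bar> < e3 \<Longrightarrow> \<bar>t\<bar> < e3 \<Longrightarrow> \<bar>f2 j t - d\<bar> < \<bar>d\<bar> / 2" unfolding d_def by blast
  define e where "e = min e1 (min e2 e3)"
  have e: "e > 0" "e \<le> e1" "e \<le> e2" "e \<le> e3" using e1 e2 e3 by (auto simp: e_def)
  define M where "M = 2 * \<bar>c\<bar> + \<bar>f12 0 0\<bar> + 1"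
  have M: "M > 0" by (simp add: M_def add_nonneg_pos)
  have bf11: "\<bar>f11 j t\<bar> \<le> M" "\<bar>c\<bar> / 2 \<le> \<bar>f11 j t\<bar>" if "\<bar>j\<bar> < e" "\<bar>t\<bar> < e" for j t
  proof -
    have w: "\<bar>f11 j t - c\<bar> < \<bar>c\<bar> / 2" using b1[of j t] that e by simp
    have t1: "\<bar>f11 j t\<bar> - \<bar>c\<bar> \<le> \<bar>f11 j t - c\<bar>" by (rule abs_triangle_ineq2)
    have t2: "\<bar>c\<bar> - \<bar>f11 j t\<bar> \<le> \<bar>f11 j t - c\<bar>" using abs_triangle_ineq2[of c "f11 j t"] by (simp add: abs_minus_commute)
    have "0 \<le> \<bar>f12 0 0\<bar>" by simp
    then show "\<bar>f11 j t\<bar> \<le> M" "\<bar>c\<bar> / 2 \<le> \<bar>f11 j t\<bar>" using w t1 t2 unfolding M_def by linarith+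
  qed
  have bf12: "\<bar>f12 j t\<bar> \<le> M" if "\<bar>j\<bar> < e" "\<bar>t\<bar> < e" for j t
  proof -
    have w: "\<bar>f12 j t - f12 0 0\<bar> < 1" using b2[of j t] that e by simp
    have t1: "\<bar>f12 j t\<bar> - \<bar>f12 0 0\<bar> \<le> \<bar>f12 j t - f12 0 0\<bar>" by (rule abs_triangle_ineq2)
    have "0 \<le> \<bar>c\<bar>" by simp
    then show ?thesis using w t1 unfolding M_def by linarith
  qed
  have bf2: "\<bar>d\<bar> / 2 \<le> \<bar>f2 j t\<bar>" if "\<bar>j\<bar> < e" "\<bar>t\<bar> < e" for j t
  proof -
    have w: "\<bar>f2 j t - d\<bar> < \<bar>d\<bar> / 2" using b3[of j t] that e by simp
    have t2: "\<bar>d\<bar> - \<bar>f2 j t\<bar> \<le> \<bar>f2 j t - d\<bar>" using abs_triangle_ineq2[of d "f2 j t"] by (simp add: abs_minus_commute)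
    then show ?thesis using w by linarith
  qed
  define \<delta> where "\<delta> = min e (\<bar>d\<bar> * (\<bar>c\<bar> * \<bar>c\<bar>) / (8 * M^3))"
  have \<delta>: "\<delta> > 0" "\<delta> \<le> e" "\<delta> \<le> \<bar>d\<bar> * (\<bar>c\<bar> * \<bar>c\<bar>) / (8 * M^3)"
  proof -
    have "0 < \<bar>d\<bar> * (\<bar>c\<bar> * \<bar>c\<bar>) / (8 * M^3)" using c d M by (intro divide_pos_pos mult_pos_pos) auto
    then show "\<delta> > 0" "\<delta> \<le> e" "\<delta> \<le> \<bar>d\<bar> * (\<bar>c\<bar> * \<bar>c\<bar>) / (8 * M^3)" using e by (auto simp: \<delta>_def)
  qed
  show ?thesis
  proof (rule exI[of _ \<delta>], intro conjI allI impI)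
    show "\<delta> > 0" by fact
    fix \<tau> j0 assume H: "0 < \<bar>\<tau>\<bar> \<and> \<bar>\<tau>\<bar> < \<delta> \<and> \<bar>j0\<bar> < \<delta> \<and> \<nu>1 j0 \<tau> = 0"
    have tau: "0 < \<bar>\<tau>\<bar>" "\<bar>\<tau>\<bar> < e" and j0: "\<bar>j0\<bar> < e" and z: "\<nu>1 j0 \<tau> = 0" using H \<delta> by auto
    show "\<exists>D. D \<noteq> 0 \<and> ((\<lambda>j. \<nu>1 j \<tau>) has_real_derivative D) (at j0)"
    proof (intro exI[of _ "f1 j0 \<tau>"] conjI)
      show "((\<lambda>j. \<nu>1 j \<tau>) has_real_derivative f1 j0 \<tau>) (at j0)" by (rule d1)
      show "f1 j0 \<tau> \<noteq> 0"
      proof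
        assume f0: "f1 j0 \<tau> = 0"
        obtain \<xi>1 where x1: "min 0 \<tau> \<le> \<xi>1" "\<xi>1 \<le> max 0 \<tau>" "f1 0 \<tau> - f1 0 0 = (\<tau> - 0) * f12 0 \<xi>1"
          using mvt_between[of "\<lambda>s. f1 0 s" "\<lambda>s. f12 0 s" 0 \<tau>] d12 by blast
        have "\<bar>\<xi>1\<bar> < e" using x1 tau by (auto simp: min_def max_def split: if_splits)
        then have "\<bar>f12 0 \<xi>1\<bar> \<le> M" using bf12[of 0 \<xi>1] e by simp
        then have "\<bar>\<tau>\<bar> * \<bar>f12 0 \<xi>1\<bar> \<le> \<bar>\<tau>\<bar> * M" by (intro mult_left_mono) auto
        then have i: "\<bar>f1 0 \<tau>\<bar> \<le> M * \<bar>\<tau>\<bar>" using x1(3) f100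
          by (simp add: abs_mult mult.commute)
        obtain \<xi>2 where x2: "min j0 0 \<le> \<xi>2" "\<xi>2 \<le> max j0 0" "f1 0 \<tau> - f1 j0 \<tau> = (0 - j0) * f11 \<xi>2 \<tau>"
          using mvt_between[of "\<lambda>s. f1 s \<tau>" "\<lambda>s. f11 s \<tau>" j0 0] d11 by blast
        have "\<bar>\<xi>2\<bar> < e" using x2 j0 by (auto simp: min_def max_def split: if_splits)
        then have "\<bar>c\<bar> / 2 \<le> \<bar>f11 \<xi>2 \<tau>\<bar>" using bf11 tau by simp
        then have "\<bar>j0\<bar> * (\<bar>c\<bar> / 2) \<le> \<bar>j0\<bar> * \<bar>f11 \<xi>2 \<tau>\<bar>" by (intro mult_left_mono) auto
        also have "\<dots> = \<bar>f1 0 \<tau>\<bar>" using x2(3) f0 by (simp add: abs_mult)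
        finally have ii: "\<bar>j0\<bar> * \<bar>c\<bar> / 2 \<le> M * \<bar>\<tau>\<bar>" using i by simp
        obtain \<eta> where x3: "min j0 0 \<le> \<eta>" "\<eta> \<le> max j0 0" "\<nu>1 0 \<tau> - \<nu>1 j0 \<tau> = (0 - j0) * f1 \<eta> \<tau>"
          using mvt_between[of "\<lambda>s. \<nu>1 s \<tau>" "\<lambda>s. f1 s \<tau>" j0 0] d1 by blast
        obtain \<xi>3 where x4: "min j0 \<eta> \<le> \<xi>3" "\<xi>3 \<le> max j0 \<eta>" "f1 \<eta> \<tau> - f1 j0 \<tau> = (\<eta> - j0) * f11 \<xi>3 \<tau>"
          using mvt_between[of "\<lambda>s. f1 s \<tau>" "\<lambda>s. f11 s \<tau>" j0 \<eta>] d11 by blast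
        have "\<bar>\<xi>3\<bar> < e" using x3 x4 j0 by (auto simp: min_def max_def split: if_splits)
        then have "\<bar>f11 \<xi>3 \<tau>\<bar> \<le> M" using bf11 tau by simp
        moreover have "\<bar>\<eta> - j0\<bar> \<le> \<bar>j0\<bar>" using x3 by (auto simp: min_def max_def split: if_splits)
        ultimately have "\<bar>\<eta> - j0\<bar> * \<bar>f11 \<xi>3 \<tau>\<bar> \<le> \<bar>j0\<bar> * M" by (intro mult_mono) auto
        then have f1eta: "\<bar>f1 \<eta> \<tau>\<bar> \<le> \<bar>j0\<bar> * M" using x4(3) f0 by (simp add: abs_mult)
        have "\<bar>\<nu>1 0 \<tau>\<bar> = \<bar>j0\<bar> * \<bar>f1 \<eta> \<tau>\<bar>" using x3(3) z by (simp add: abs_mult)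
        also have "\<dots> \<le> \<bar>j0\<bar> * (\<bar>j0\<bar> * M)" using f1eta by (intro mult_left_mono) auto
        finally have iii: "\<bar>\<nu>1 0 \<tau>\<bar> \<le> M * (\<bar>j0\<bar> * \<bar>j0\<bar>)" by (simp add: algebra_simps)
        obtain \<xi>4 where x5: "min 0 \<tau> \<le> \<xi>4" "\<xi>4 \<le> max 0 \<tau>" "\<nu>1 0 \<tau> - \<nu>1 0 0 = (\<tau> - 0) * f2 0 \<xi>4"
          using mvt_between[of "\<lambda>s. \<nu>1 0 s" "\<lambda>s. f2 0 s" 0 \<tau>] d2 by blast
        have "\<bar>\<xi>4\<bar> < e" using x5 tau by (auto simp: min_def max_def split: if_splits)
        then have "\<bar>d\<bar> / 2 \<le> \<bar>f2 0 \<xi>4\<bar>" using bf2 e by simp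
        then have "\<bar>\<tau>\<bar> * (\<bar>d\<bar> / 2) \<le> \<bar>\<tau>\<bar> * \<bar>f2 0 \<xi>4\<bar>" by (intro mult_left_mono) auto
        also have "\<dots> = \<bar>\<nu>1 0 \<tau>\<bar>" using x5(3) h0 by (simp add: abs_mult)
        finally have iv: "\<bar>\<tau>\<bar> * \<bar>d\<bar> / 2 \<le> M * (\<bar>j0\<bar> * \<bar>j0\<bar>)" using iii by simp
        have "\<bar>\<tau>\<bar> < \<bar>d\<bar> * (\<bar>c\<bar> * \<bar>c\<bar>) / (8 * M^3)" using H \<delta> by linarith
        moreover have "\<bar>c\<bar> > 0" using c by simp
        ultimately show False by (intro ineq_contra[OF abs_ge_zero tau(1) _ M ii iv])
      qed
    qed
  qed
qed

lemma near_N: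
  fixes x N :: real assumes "\<bar>x - N\<bar> < \<bar>N\<bar> / 2" "N \<noteq> 0"
  shows "x * N > 0" "\<bar>N\<bar> / 2 \<le> \<bar>x\<bar>"
proof -
  have t: "\<bar>N\<bar> - \<bar>x\<bar> \<le> \<bar>x - N\<bar>" using abs_triangle_ineq2[of N x] by (simp add: abs_minus_commute)
  then show "\<bar>N\<bar> / 2 \<le> \<bar>x\<bar>" using assms(1) by linarith
  have e1: "x * N = \<bar>N\<bar> * \<bar>N\<bar> + (x - N) * N" by (simp add: algebra_simps)
  have e2: "- ((x - N) * N) \<le> \<bar>x - N\<bar> * \<bar>N\<bar>" using abs_ge_minus_self[of "(x - N) * N"] by (simp add: abs_mult)
  have e3: "\<bar>x - N\<bar> * \<bar>N\<bar> \<le> (\<bar>N\<bar> / 2) * \<bar>N\<bar>" using assms(1) by (intro mult_right_mono) auto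
  have e4: "(\<bar>N\<bar> / 2) * \<bar>N\<bar> = (\<bar>N\<bar> * \<bar>N\<bar>) / 2" by simp
  have e5: "\<bar>N\<bar> * \<bar>N\<bar> > 0" using sq_pos[OF assms(2)] by simp
  show "x * N > 0" using e1 e2 e3 e4 e5 by linarith
qed

lemma flip_setup:
  fixes n1 n2 :: "real \<Rightarrow> real" and b :: real
  assumes D: "(n1 has_real_derivative D) (at j0)" "D \<noteq> 0" and z: "n1 j0 = 0" and N: "n2 j0 \<noteq> 0"
    and c2: "isCont n2 j0" and b: "b \<noteq> 0"
  shows "\<exists>\<epsilon>>0. \<exists>\<sigma>\<in>{-1, 1::real}.
     (\<forall>j. 0 < \<sigma> * (j0 - j) \<longrightarrow> \<sigma> * (j0 - j) < \<epsilon> \<longrightarrow>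
        n1 j * n2 j0 > 0 \<and> n2 j * n2 j0 > 0 \<and> \<bar>n2 j0\<bar> / 2 \<le> \<bar>n2 j\<bar>) \<and>
     (\<forall>j. 0 < \<sigma> * (j - j0) \<longrightarrow> \<sigma> * (j - j0) < \<epsilon> \<longrightarrow>
        n1 j * n2 j0 < 0 \<and> n2 j * n2 j0 > 0 \<and> \<bar>n2 j0\<bar> / 2 \<le> \<bar>n2 j\<bar> \<and> 8 * \<bar>b\<bar> * \<bar>n1 j\<bar> \<le> (n2 j)^2)"
proof -
  define N where "N = n2 j0"
  have N0: "N \<noteq> 0" using N by (simp add: N_def)
  have "\<bar>N\<bar> / 2 > 0" using N0 by simp
  with c2 obtain d3 where d3: "d3 > 0" and b3: "\<And>j. dist j j0 < d3 \<Longrightarrow> dist (n2 j) (n2 j0) < \<bar>N\<bar> / 2"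
    unfolding continuous_at_eps_delta by blast
  have isc1: "isCont n1 j0" using DERIV_isCont[OF D(1)] .
  define K where "K = N * N / (32 * \<bar>b\<bar>)"
  have K: "K > 0" using sq_pos[OF N0] b by (simp add: K_def)
  with isc1 obtain d4 where d4: "d4 > 0" and b4: "\<And>j. dist j j0 < d4 \<Longrightarrow> dist (n1 j) (n1 j0) < K"
    unfolding continuous_at_eps_delta by blast
  define m where "m = (\<lambda>j. n1 j * N)"
  have dm: "(m has_real_derivative D * N) (at j0)" unfolding m_def using D(1) by (intro derivative_eq_intros) auto
  have m0: "m j0 = 0" using z by (simp add: m_def)
  have DN: "D * N \<noteq> 0" using D(2) N0 by simp
  have good: "n2 j * N > 0 \<and> \<bar>N\<bar> / 2 \<le> \<bar>n2 j\<bar> \<and> 8 * \<bar>b\<bar> * \<bar>n1 j\<bar> \<le> (n2 j)^2"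
    if "\<bar>j - j0\<bar> < min d3 d4" for j
  proof -
    have "\<bar>n2 j - N\<bar> < \<bar>N\<bar> / 2" using b3[of j] that by (simp add: dist_real_def N_def)
    from near_N[OF this N0] have g: "n2 j * N > 0" "\<bar>N\<bar> / 2 \<le> \<bar>n2 j\<bar>" .
    have "\<bar>n1 j\<bar> < K" using b4[of j] that z by (simp add: dist_real_def)
    then have "8 * \<bar>b\<bar> * \<bar>n1 j\<bar> \<le> 8 * \<bar>b\<bar> * K" using b by (intro mult_left_mono) auto
    also have "\<dots> = (\<bar>N\<bar> / 2) * (\<bar>N\<bar> / 2)" using b by (simp add: K_def)
    also have "\<dots> \<le> \<bar>n2 j\<bar> * \<bar>n2 j\<bar>" using g(2) by (intro mult_mono) auto
    also have "\<dots> = (n2 j)^2" by (simp add: power2_eq_square)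
    finally show ?thesis using g by simp
  qed
  show ?thesis
  proof (cases "D * N > 0")
    case True
    obtain e1 where e1: "e1 > 0" "\<And>h. h > 0 \<Longrightarrow> h < e1 \<Longrightarrow> m j0 < m (j0 + h)"
      using DERIV_pos_inc_right[OF dm True] by blast
    obtain e2 where e2: "e2 > 0" "\<And>h. h > 0 \<Longrightarrow> h < e2 \<Longrightarrow> m (j0 - h) < m j0"
      using DERIV_pos_inc_left[OF dm True] by blast
    define \<epsilon> where "\<epsilon> = min (min e1 e2) (min d3 d4)"
    have eps: "\<epsilon> > 0" using e1 e2 d3 d4 by (simp add: \<epsilon>_def)
    show ?thesis
    proof (rule exI[of _ \<epsilon>], rule conjI[OF eps], rule bexI[of _ "-1"], intro conjI allI impI)
      fix j assume j: "0 < - 1 * (j0 - j)" "- 1 * (j0 - j) < \<epsilon>"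
      have "m j0 < m (j0 + (j - j0))" using e1(2)[of "j - j0"] j by (simp add: \<epsilon>_def)
      then have "0 < m j" using m0 by simp
      then show "n1 j * n2 j0 > 0" by (simp add: m_def N_def)
      have "\<bar>j - j0\<bar> < min d3 d4" using j by (simp add: \<epsilon>_def)
      from good[OF this] show "n2 j * n2 j0 > 0" "\<bar>n2 j0\<bar> / 2 \<le> \<bar>n2 j\<bar>" by (simp_all add: N_def)
    next
      fix j assume j: "0 < - 1 * (j - j0)" "- 1 * (j - j0) < \<epsilon>"
      have "m (j0 - (j0 - j)) < m j0" using e2(2)[of "j0 - j"] j by (simp add: \<epsilon>_def)
      then have "m j < 0" using m0 by simp
      then show "n1 j * n2 j0 < 0" by (simp add: m_def N_def)
      have "\<bar>j - j0\<bar> < min d3 d4" using j by (simp add: \<epsilon>_def)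
      from good[OF this] show "n2 j * n2 j0 > 0" "\<bar>n2 j0\<bar> / 2 \<le> \<bar>n2 j\<bar>" "8 * \<bar>b\<bar> * \<bar>n1 j\<bar> \<le> (n2 j)^2"
        by (simp_all add: N_def)
    qed simp
  next
    case False
    then have neg: "D * N < 0" using DN by linarith
    obtain e1 where e1: "e1 > 0" "\<And>h. h > 0 \<Longrightarrow> h < e1 \<Longrightarrow> m (j0 + h) < m j0"
      using DERIV_neg_dec_right[OF dm neg] by blast
    obtain e2 where e2: "e2 > 0" "\<And>h. h > 0 \<Longrightarrow> h < e2 \<Longrightarrow> m j0 < m (j0 - h)"
      using DERIV_neg_dec_left[OF dm neg] by blast
    define \<epsilon> where "\<epsilon> = min (min e1 e2) (min d3 d4)"
    have eps: "\<epsilon> > 0" using e1 e2 d3 d4 by (simp add: \<epsilon>_def)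
    show ?thesis
    proof (rule exI[of _ \<epsilon>], rule conjI[OF eps], rule bexI[of _ "1"], intro conjI allI impI)
      fix j assume j: "0 < 1 * (j0 - j)" "1 * (j0 - j) < \<epsilon>"
      have "m j0 < m (j0 - (j0 - j))" using e2(2)[of "j0 - j"] j by (simp add: \<epsilon>_def)
      then have "0 < m j" using m0 by simp
      then show "n1 j * n2 j0 > 0" by (simp add: m_def N_def)
      have "\<bar>j - j0\<bar> < min d3 d4" using j by (simp add: \<epsilon>_def)
      from good[OF this] show "n2 j * n2 j0 > 0" "\<bar>n2 j0\<bar> / 2 \<le> \<bar>n2 j\<bar>" by (simp_all add: N_def)
    next
      fix j assume j: "0 < 1 * (j - j0)" "1 * (j - j0) < \<epsilon>"
      have "m (j0 + (j - j0)) < m j0" using e1(2)[of "j - j0"] j by (simp add: \<epsilon>_def)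
      then have "m j < 0" using m0 by simp
      then show "n1 j * n2 j0 < 0" by (simp add: m_def N_def)
      have "\<bar>j - j0\<bar> < min d3 d4" using j by (simp add: \<epsilon>_def)
      from good[OF this] show "n2 j * n2 j0 > 0" "\<bar>n2 j0\<bar> / 2 \<le> \<bar>n2 j\<bar>" "8 * \<bar>b\<bar> * \<bar>n1 j\<bar> \<le> (n2 j)^2"
        by (simp_all add: N_def)
    qed simp
  qed
qed

theorem lemma2p3:
  fixes a b :: real and \<nu>1 \<nu>2 :: "real \<Rightarrow> real \<Rightarrow> real"
  assumes "a \<noteq> 0" and "b \<noteq> 0"
    and "smooth2 \<nu>1" and "smooth2 \<nu>2"
    and "\<nu>1 0 0 = 0"
    and "deriv (\<lambda>j. \<nu>1 j 0) 0 = 0"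
    and "deriv (deriv (\<lambda>j. \<nu>1 j 0)) 0 \<noteq> 0"
    and "deriv (\<lambda>t. \<nu>1 0 t) 0 \<noteq> 0"
  shows "\<exists>\<delta>>0. \<forall>\<tau> j0. 0 < \<bar>\<tau>\<bar> \<and> \<bar>\<tau>\<bar> < \<delta> \<and> \<bar>j0\<bar> < \<delta> \<and>
            \<nu>1 j0 \<tau> = 0 \<and> \<nu>2 j0 \<tau> \<noteq> 0 \<longrightarrow>
          (a * \<nu>2 j0 \<tau> < 0 \<longrightarrow>
             dual_hamiltonian_flip (\<lambda>j. ham_vf (H_fam a b \<nu>1 \<nu>2 j \<tau>)) j0) \<and>
          (a * \<nu>2 j0 \<tau> > 0 \<longrightarrow>
             hamiltonian_flip (\<lambda>j. ham_vf (H_fam a b \<nu>1 \<nu>2 j \<tau>)) j0)"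
proof -
  note a = assms(1) and b = assms(2)
  obtain \<delta> where \<delta>: "\<delta> > 0" and R: "\<forall>\<tau> j0. 0 < \<bar>\<tau>\<bar> \<and> \<bar>\<tau>\<bar> < \<delta> \<and> \<bar>j0\<bar> < \<delta> \<and> \<nu>1 j0 \<tau> = 0 \<longrightarrow>
           (\<exists>D. D \<noteq> 0 \<and> ((\<lambda>j. \<nu>1 j \<tau>) has_real_derivative D) (at j0))"
    using nu1_root_deriv[OF assms(3,5,6,7,8)] by blast
  have c2: "continuous_on UNIV (\<lambda>z. \<nu>2 (fst z) (snd z))"
    using assms(4) unfolding smooth2_def using Ck2_cont by blast
  show ?thesis
  proof (rule exI[of _ \<delta>], rule conjI[OF \<delta>], intro allI impI)
    fix \<tau> j0 assume H: "0 < \<bar>\<tau>\<bar> \<and> \<bar>\<tau>\<bar> < \<delta> \<and> \<bar>j0\<bar> < \<delta> \<and> \<nu>1 j0 \<tau> = 0 \<and> \<nu>2 j0 \<tau> \<noteq> 0"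
    define n1 where "n1 = (\<lambda>j. \<nu>1 j \<tau>)"
    define n2 where "n2 = (\<lambda>j. \<nu>2 j \<tau>)"
    obtain D where D: "D \<noteq> 0" "(n1 has_real_derivative D) (at j0)"
      using R H unfolding n1_def by blast
    have z: "n1 j0 = 0" and N: "n2 j0 \<noteq> 0" using H by (auto simp: n1_def n2_def)
    have i1: "isCont (\<lambda>z. \<nu>2 (fst z) (snd z)) (j0, \<tau>)"
      using continuous_on_eq_continuous_at[OF open_UNIV, THEN iffD1, OF c2, rule_format, OF UNIV_I] .
    have i2: "isCont (\<lambda>j. (j, \<tau>)) j0" by (intro continuous_intros)
    have ic2: "isCont n2 j0" unfolding n2_def
      using isCont_o2[OF i2 i1] by simp
    have lim: "(n1 \<longlongrightarrow> 0) (at j0)"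
      using DERIV_isCont[OF D(2)] z unfolding isCont_def by simp
    obtain \<epsilon> \<sigma> where eps: "\<epsilon> > 0" and sig: "\<sigma> \<in> {-1, 1::real}"
      and bef: "\<forall>j. 0 < \<sigma> * (j0 - j) \<longrightarrow> \<sigma> * (j0 - j) < \<epsilon> \<longrightarrow>
        n1 j * n2 j0 > 0 \<and> n2 j * n2 j0 > 0 \<and> \<bar>n2 j0\<bar> / 2 \<le> \<bar>n2 j\<bar>"
      and aft: "\<forall>j. 0 < \<sigma> * (j - j0) \<longrightarrow> \<sigma> * (j - j0) < \<epsilon> \<longrightarrow>
        n1 j * n2 j0 < 0 \<and> n2 j * n2 j0 > 0 \<and> \<bar>n2 j0\<bar> / 2 \<le> \<bar>n2 j\<bar> \<and> 8 * \<bar>b\<bar> * \<bar>n1 j\<bar> \<le> (n2 j)^2"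
      using flip_setup[OF D(2) D(1) z N ic2 b] by blast
    have F: "(\<lambda>j. ham_vf (H_fam a b \<nu>1 \<nu>2 j \<tau>)) = (\<lambda>j. FF a b (n1 j) (n2 j))"
      by (simp add: ham_FF n1_def n2_def)
    have G: "flip_bif dual (\<lambda>j. FF a b (n1 j) (n2 j)) j0"
      if "dual \<longleftrightarrow> a * n2 j0 < 0" "a * n2 j0 \<noteq> 0" for dual
      by (rule flip_generic[OF a b N eps sig _ _ lim that]) (use bef aft in blast)+
    have s1: "a * \<nu>2 j0 \<tau> < 0 \<longrightarrow> dual_hamiltonian_flip (\<lambda>j. ham_vf (H_fam a b \<nu>1 \<nu>2 j \<tau>)) j0"
      using G[of True] a H unfolding F n2_def by auto
    have s2: "a * \<nu>2 j0 \<tau> > 0 \<longrightarrow> hamiltonian_flip (\<lambda>j. ham_vf (H_fam a b \<nu>1 \<nu>2 j \<tau>)) j0"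
      using G[of False] a H unfolding F n2_def by auto
    show "(a * \<nu>2 j0 \<tau> < 0 \<longrightarrow> dual_hamiltonian_flip (\<lambda>j. ham_vf (H_fam a b \<nu>1 \<nu>2 j \<tau>)) j0) \<and>
          (a * \<nu>2 j0 \<tau> > 0 \<longrightarrow> hamiltonian_flip (\<lambda>j. ham_vf (H_fam a b \<nu>1 \<nu>2 j \<tau>)) j0)"
      using s1 s2 by (rule conjI)
  qed
qed

end
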